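(* For every $k,m,r\in\mathbb{N}$ there is $n\in\mathbb{N}$ such that for every $c:M^{\mathrm{ba}}_{n,k}\to r$ there is $R\in M^{\mathrm{oba}}_{n,m}$ such that the color $c(R\cdot B)$ depends only on $\pi(B)$ for $B\in M^{\mathrm{ba}}_{m,k}$; that is, there is $\widehat{c}:\mathcal{S}_k\to r$ with $c(R\cdot B)=\widehat{c}(\pi(B))$ for every $B\in M^{\mathrm{ba}}_{m,k}$.
   Context: $r$ is identified with $\{0,\dots,r-1\}$. $M^{\mathrm{ba}}_{n,k}$ (Boolean matrices) is the set of $n\times k$ matrices with entries in $\{0,1\}$ whose columns, viewed as subsets $P_0,\dots,P_{k-1}$ of $\{0,\dots,n-1\}$, form a partition of $\{0,\dots,n-1\}$ into $k$ (nonempty) pieces. $M^{\mathrm{oba}}_{n,k}$ is the set of those in $M^{\mathrm{ba}}_{n,k}$ with $\min P_i<\min P_{i+1}$ for all $i<k-1$. $\mathcal{S}_k$ is the group of permutations of $k$, identified with $k\times k$ permutation matrices, and $\pi:M^{\mathrm{ba}}_{n,k}\to\mathcal{S}_k$ assigns to $A$ the unique $\pi(A)\in\mathcal{S}_k$ with $A\cdot\pi(A)\in M^{\mathrm{oba}}_{n,k}$. *)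

theory Defs
  imports "HOL-Combinatorics.Permutations" "Jordan_Normal_Form.Matrix"
begin

definition col_set :: "nat mat \<Rightarrow> nat \<Rightarrow> nat set" where
  "col_set A j = {i. i < dim_row A \<and> A $$ (i, j) = 1}"

definition Mba :: "nat \<Rightarrow> nat \<Rightarrow> nat mat set" where
  "Mba n k = {A. A \<in> carrier_mat n k
     \<and> (\<forall>i<n. \<forall>j<k. A $$ (i, j) \<in> {0, 1})
     \<and> (\<forall>j<k. col_set A j \<noteq> {})
     \<and> (\<forall>j<k. \<forall>j'<k. j \<noteq> j' \<longrightarrow> col_set A j \<inter> col_set A j' = {})
     \<and> (\<Union>j<k. col_set A j) = {..<n}}"

definition Moba :: "nat \<Rightarrow> nat \<Rightarrow> nat mat set" where
  "Moba n k = {A \<in> Mba n k. \<forall>i. i + 1 < k \<longrightarrow> Min (col_set A i) < Min (col_set A (i + 1))}"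

definition perm_mat :: "nat \<Rightarrow> (nat \<Rightarrow> nat) \<Rightarrow> nat mat" where
  "perm_mat k p = mat k k (\<lambda>(i, j). if p i = j then 1 else 0)"

definition Sk :: "nat \<Rightarrow> nat mat set" where
  "Sk k = {perm_mat k p | p. p permutes {..<k}}"

definition piM :: "nat mat \<Rightarrow> nat mat" where
  "piM A = (THE P. P \<in> Sk (dim_col A) \<and> A * P \<in> Moba (dim_row A) (dim_col A))"

end

theory Submission
  imports Defs
begin

definition rigid :: "nat \<Rightarrow> nat list \<Rightarrow> bool" where
  "rigid t w \<longleftrightarrow> (\<forall>i<length w. t < w!i \<longrightarrow> w!i - 1 \<in> set (take i w))"

definition pw :: "nat \<Rightarrow> nat \<Rightarrow> nat \<Rightarrow> nat list set" where
  "pw t n k = {w. length w = n \<and> set w \<subseteq> {..<t+k} \<and> {t..<t+k} \<subseteq> set w \<and> rigid t w}"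

definition cmp :: "nat \<Rightarrow> nat list \<Rightarrow> nat list \<Rightarrow> nat list" where
  "cmp t f g = map (\<lambda>x. if x < t then x else g ! (x - t)) f"

definition pfx :: "nat \<Rightarrow> nat list \<Rightarrow> nat list" where
  "pfx t w = takeWhile (\<lambda>x. x < t) w"

definition idw :: "nat \<Rightarrow> nat \<Rightarrow> nat list" where
  "idw t m = map (\<lambda>j. t + j) [0..<m]"

lemma rigid_lt:
  assumes "rigid t w" "i < length w" "w!i = t + p" "p' < p"
  shows "t + p' \<in> set (take i w)"
  using assms(2-4)
proof (induction p arbitrary: i)
  case 0 then show ?case by simp
next
  case (Suc p)
  have "t + p \<in> set (take i w)" using assms(1) Suc.prems unfolding rigid_def by force
  then obtain i0 where i0: "i0 < i" "w!i0 = t + p" 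
    by (auto simp: in_set_conv_nth)
  show ?case
  proof (cases "p' = p")
    case True then show ?thesis using \<open>t + p \<in> set (take i w)\<close> by simp
  next
    case False
    then have "t + p' \<in> set (take i0 w)" using Suc.IH[of i0] i0 Suc.prems by auto
    moreover have "set (take i0 w) \<subseteq> set (take i w)" using i0 by (simp add: set_take_subset_set_take)
    ultimately show ?thesis by blast
  qed
qed

lemma cmp_length[simp]: "length (cmp t f g) = length f"
  by (simp add: cmp_def)

lemma cmp_nth: "i < length f \<Longrightarrow> cmp t f g ! i = (if f!i < t then f!i else g ! (f!i - t))"
  by (simp add: cmp_def)

lemma cmp_append[simp]: "cmp t (u @ v) g = cmp t u g @ cmp t v g"
  by (simp add: cmp_def)

lemma cmp_Cons: "cmp t (x # u) g = (if x < t then x else g ! (x - t)) # cmp t u g"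
  by (simp add: cmp_def)

lemma cmp_Nil[simp]: "cmp t [] g = []"
  by (simp add: cmp_def)

lemma pwD:
  assumes "w \<in> pw t n k"
  shows "length w = n" "\<And>x. x \<in> set w \<Longrightarrow> x < t + k" "\<And>j. j < k \<Longrightarrow> t + j \<in> set w" "rigid t w"
  using assms unfolding pw_def by auto

lemma pwI:
  assumes "length w = n" "\<And>x. x \<in> set w \<Longrightarrow> x < t + k" "\<And>j. j < k \<Longrightarrow> t + j \<in> set w" "rigid t w"
  shows "w \<in> pw t n k"
  using assms unfolding pw_def by (auto simp: subset_iff) (metis add_diff_inverse_nat le_add_diff_inverse nat_add_left_cancel_less not_less)

lemma cmp_pw:
  assumes f: "f \<in> pw t n m" and g: "g \<in> pw t m k"
  shows "cmp t f g \<in> pw t n k"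
proof (rule pwI)
  show "length (cmp t f g) = n" using pwD(1)[OF f] by simp
  have lg: "length g = m" using pwD(1)[OF g] .
  show "x < t + k" if "x \<in> set (cmp t f g)" for x
  proof -
    from that obtain i where i: "i < length f" "x = cmp t f g ! i" by (auto simp: in_set_conv_nth)
    show ?thesis
    proof (cases "f!i < t")
      case True then show ?thesis using i by (simp add: cmp_nth)
    next
      case False
      have "f!i < t + m" using pwD(2)[OF f] i(1) by auto
      then have "g ! (f!i - t) \<in> set g" using False lg by auto
      then show ?thesis using i False pwD(2)[OF g] by (simp add: cmp_nth)
    qed
  qed
  show "t + j \<in> set (cmp t f g)" if jk: "j < k" for j
  proof -
    obtain p where p: "p < m" "g!p = t + j" using pwD(3)[OF g jk] lg by (auto simp: in_set_conv_nth)
    obtain i where i: "i < length f" "f!i = t + p" using pwD(3)[OF f p(1)] by (auto simp: in_set_conv_nth)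
    have "cmp t f g ! i = t + j" using i p by (simp add: cmp_nth)
    then show ?thesis using i(1) nth_mem[of i "cmp t f g"] by simp
  qed
  show "rigid t (cmp t f g)"
    unfolding rigid_def
  proof (intro allI impI)
    fix i assume i: "i < length (cmp t f g)" and lt: "t < cmp t f g ! i"
    then have il: "i < length f" by simp
    have nl: "\<not> f!i < t" using lt il by (auto simp: cmp_nth split: if_splits)
    define p where "p = f!i - t"
    have fi: "f!i = t + p" using nl p_def by simp
    have "f!i < t + m" using pwD(2)[OF f] il by simp
    then have pm: "p < m" using fi by simp
    have gp: "g!p = cmp t f g ! i" using il nl p_def by (simp add: cmp_nth)
    have "g!p - 1 \<in> set (take p g)" using pwD(4)[OF g] lt gp pm lg unfolding rigid_def by auto
    then obtain p' where p': "p' < p" "g!p' = g!p - 1" by (auto simp: in_set_conv_nth)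
    have "t + p' \<in> set (take i f)" using rigid_lt[OF pwD(4)[OF f] il fi p'(1)] .
    then obtain i' where i': "i' < i" "f!i' = t + p'" by (auto simp: in_set_conv_nth)
    have "cmp t f g ! i' = g!p - 1" using i' il p' by (simp add: cmp_nth)
    moreover have "i' < length (take i (cmp t f g))" using i' il by simp
    ultimately have "take i (cmp t f g) ! i' = g!p - 1" using i' by simp
    then show "cmp t f g ! i - 1 \<in> set (take i (cmp t f g))"
      using gp \<open>i' < length (take i (cmp t f g))\<close> nth_mem by metis
  qed
qed

lemma cmp_assoc:
  assumes "set f \<subseteq> {..<t + length g}"
  shows "cmp t (cmp t f g) h = cmp t f (cmp t g h)"
  unfolding cmp_def using assms by (auto simp: subset_iff intro!: map_cong)

lemma idw_pw: "idw t m \<in> pw t m m"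
proof -
  have "t + i - 1 \<in> set (take i (map ((+) t) [0..<m]))" if "i < m" "0 < i" for i
  proof -
    have "take i (map ((+) t) [0..<m]) = map ((+) t) [0..<i]" using that by (simp add: take_map)
    moreover have "t + i - 1 = t + (i - 1)" using that by simp
    ultimately show ?thesis using that by (simp add: image_iff del: One_nat_def; linarith)
  qed
  then show ?thesis unfolding pw_def idw_def rigid_def by (auto simp: image_iff)
qed

lemma cmp_idw: "length g = m \<Longrightarrow> cmp t (idw t m) g = g"
  unfolding cmp_def idw_def by (auto intro: nth_equalityI)

lemma pw0: "pw t n 0 = {w. length w = n \<and> set w \<subseteq> {..<t}}"
  unfolding pw_def rigid_def by (auto simp: subset_iff) (meson in_set_conv_nth not_less_iff_gr_or_eq less_trans)

lemma gen_col:
  fixes D :: "nat \<Rightarrow> 'a set" and T :: "'b \<Rightarrow> 'd \<Rightarrow> 'a"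
  assumes A: "\<And>r. \<exists>n. \<forall>\<chi>::'a \<Rightarrow> nat. (\<forall>w\<in>D n. \<chi> w < r) \<longrightarrow> (\<exists>f\<in>S n. \<exists>c. \<forall>g\<in>G f. \<chi> (T f g) = c)"
    and B: "\<And>n f g. f \<in> S n \<Longrightarrow> g \<in> G f \<Longrightarrow> T f g \<in> D n"
    and C: "finite C"
  shows "\<exists>n. \<forall>\<chi>::'a \<Rightarrow> 'c. \<chi> ` D n \<subseteq> C \<longrightarrow> (\<exists>f\<in>S n. \<exists>c. \<forall>g\<in>G f. \<chi> (T f g) = c)"
proof -
  obtain h where h: "bij_betw h C {0..<card C}" using ex_bij_betw_finite_nat[OF C] by blast
  obtain n where n: "\<forall>\<chi>::'a \<Rightarrow> nat. (\<forall>w\<in>D n. \<chi> w < card C) \<longrightarrow> (\<exists>f\<in>S n. \<exists>c. \<forall>g\<in>G f. \<chi> (T f g) = c)"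
    using A by blast
  show ?thesis
  proof (intro exI allI impI)
    fix \<chi> :: "'a \<Rightarrow> 'c" assume sub: "\<chi> ` D n \<subseteq> C"
    have "\<forall>w\<in>D n. (h \<circ> \<chi>) w < card C"
    proof
      fix w assume "w \<in> D n"
      then have "\<chi> w \<in> C" using sub by auto
      then have "h (\<chi> w) \<in> {0..<card C}" using h by (auto simp: bij_betw_def)
      then show "(h \<circ> \<chi>) w < card C" by simp
    qed
    then obtain f c where f: "f \<in> S n" "\<forall>g\<in>G f. (h \<circ> \<chi>) (T f g) = c" using n by blast
    have "\<forall>g\<in>G f. \<chi> (T f g) = inv_into C h c"
    proof
      fix g assume g: "g \<in> G f"
      have "\<chi> (T f g) \<in> C" using sub B[OF f(1) g] by auto
      then show "\<chi> (T f g) = inv_into C h c" using f(2) g h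
        by (metis bij_betw_imp_inj_on comp_apply inv_into_f_f)
    qed
    then show "\<exists>f\<in>S n. \<exists>c. \<forall>g\<in>G f. \<chi> (T f g) = c" using f(1) by blast
  qed
qed

lemma rigid_trivial: "set w \<subseteq> {..<Suc t} \<Longrightarrow> rigid t w"
  unfolding rigid_def by (auto simp: subset_iff) (meson less_Suc_eq_le not_le nth_mem)

lemma pw1: "pw t n 1 = {w. length w = n \<and> set w \<subseteq> {..<Suc t} \<and> t \<in> set w}"
  unfolding pw_def using rigid_trivial[of _ t] by auto

lemma cmp_point: "set p \<subseteq> {..<t} \<Longrightarrow> cmp t p g = p"
  unfolding cmp_def by (auto simp: subset_iff intro: map_idI)

lemma pw0_mono: "t \<le> t' \<Longrightarrow> pw t n 0 \<subseteq> pw t' n 0"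
  unfolding pw0 by auto

lemma pw0_append: "x \<in> pw t n 0 \<Longrightarrow> y \<in> pw t n' 0 \<Longrightarrow> x @ y \<in> pw t (n + n') 0"
  unfolding pw0 by auto

lemma pw1_append1: "x \<in> pw t n 1 \<Longrightarrow> y \<in> pw t n' 0 \<Longrightarrow> x @ y \<in> pw t (n + n') 1"
  unfolding pw0 pw1 by auto

lemma pw1_append2: "x \<in> pw t n 0 \<Longrightarrow> y \<in> pw t n' 1 \<Longrightarrow> x @ y \<in> pw t (n + n') 1"
  unfolding pw0 pw1 by auto

lemma pw1_append3: "x \<in> pw t n 1 \<Longrightarrow> y \<in> pw t n' 1 \<Longrightarrow> x @ y \<in> pw t (n + n') 1"
  unfolding pw1 by auto

lemma cmp_line_pt: "lne \<in> pw t n 1 \<Longrightarrow> a < t \<Longrightarrow> cmp t lne [a] \<in> pw t n 0"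
  unfolding pw0 pw1 cmp_def by (auto simp: subset_iff)

lemma pw0_ne: "0 < t \<Longrightarrow> replicate n 0 \<in> pw t n 0"
  unfolding pw0 by auto

lemma n_lists_pw0: "set (List.n_lists n [0..<t]) = pw t n 0"
  unfolding pw0 by (auto simp: set_n_lists)

definition lift1 :: "nat \<Rightarrow> nat list \<Rightarrow> nat list" where
  "lift1 t w = map (\<lambda>v. if v < t then v else Suc t) w"

lemma lift1_pw: "w \<in> pw t n 1 \<Longrightarrow> lift1 t w \<in> pw (Suc t) n 1"
  unfolding pw1 lift1_def by (auto simp: subset_iff image_iff)

lemma lift1_cmp: "w \<in> pw t n 1 \<Longrightarrow> cmp (Suc t) (lift1 t w) [a] = cmp t w [a]"
  unfolding pw1 lift1_def cmp_def by (auto simp: subset_iff intro!: map_cong)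

lemma focus:
  assumes IH: "\<And>r. \<exists>n. \<forall>\<chi>::nat list \<Rightarrow> nat. (\<forall>w\<in>pw t n 0. \<chi> w < r) \<longrightarrow> (\<exists>lne\<in>pw t n 1. \<exists>c. \<forall>a\<in>{..<t}. \<chi> (cmp t lne [a]) = c)"
  and t: "0 < t"
  shows "\<exists>n. \<forall>\<chi>::nat list \<Rightarrow> nat. (\<forall>w\<in>pw (Suc t) n 0. \<chi> w < r) \<longrightarrow> 
     (\<exists>lne\<in>pw (Suc t) n 1. \<forall>a\<le>t. \<chi> (cmp (Suc t) lne [a]) = \<chi> (cmp (Suc t) lne [0])) \<or>
     (\<exists>F ls. F \<in> pw (Suc t) n 0 \<and> length ls = s \<and> distinct (map (\<lambda>lne. \<chi> (cmp (Suc t) lne [0])) ls) \<and>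
        (\<forall>lne\<in>set ls. lne \<in> pw (Suc t) n 1 \<and> cmp (Suc t) lne [t] = F \<and> (\<forall>a<t. \<chi> (cmp (Suc t) lne [a]) = \<chi> (cmp (Suc t) lne [0]))))"
proof (induction s)
  case 0
  show ?case by (rule exI[of _ 0]) (auto simp: pw0)
next
  case (Suc s)
  obtain ns where ns: "\<forall>\<chi>::nat list \<Rightarrow> nat. (\<forall>w\<in>pw (Suc t) ns 0. \<chi> w < r) \<longrightarrow> 
     (\<exists>lne\<in>pw (Suc t) ns 1. \<forall>a\<le>t. \<chi> (cmp (Suc t) lne [a]) = \<chi> (cmp (Suc t) lne [0])) \<or>
     (\<exists>F ls. F \<in> pw (Suc t) ns 0 \<and> length ls = s \<and> distinct (map (\<lambda>lne. \<chi> (cmp (Suc t) lne [0])) ls) \<and>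
        (\<forall>lne\<in>set ls. lne \<in> pw (Suc t) ns 1 \<and> cmp (Suc t) lne [t] = F \<and> (\<forall>a<t. \<chi> (cmp (Suc t) lne [a]) = \<chi> (cmp (Suc t) lne [0]))))"
    using Suc.IH by blast
  define xs where "xs = List.n_lists ns [0..<Suc t]"
  have xs: "set xs = pw (Suc t) ns 0" unfolding xs_def n_lists_pw0 ..
  define C where "C = {l. set l \<subseteq> {..<r} \<and> length l = length xs}"
  have fC: "finite C" unfolding C_def by (rule finite_lists_length_eq) simp
  obtain L where L: "\<forall>\<chi>::nat list \<Rightarrow> nat list. \<chi> ` pw t L 0 \<subseteq> C \<longrightarrow> (\<exists>lne\<in>pw t L 1. \<exists>c. \<forall>a\<in>{..<t}. \<chi> (cmp t lne [a]) = c)"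
    using gen_col[where D="\<lambda>n. pw t n 0" and S="\<lambda>n. pw t n 1" and G="\<lambda>_. {..<t}" and T="\<lambda>lne a. cmp t lne [a]", OF IH cmp_line_pt fC]
    by blast
  show ?case
  proof (intro exI[of _ "ns + L"] allI impI)
    fix \<chi> :: "nat list \<Rightarrow> nat"
    assume bd: "\<forall>w\<in>pw (Suc t) (ns + L) 0. \<chi> w < r"
    define \<Phi> where "\<Phi> y = map (\<lambda>x. \<chi> (x @ y)) xs" for y
    have "\<Phi> ` pw t L 0 \<subseteq> C"
    proof
      fix z assume "z \<in> \<Phi> ` pw t L 0"
      then obtain y where y: "y \<in> pw t L 0" "z = \<Phi> y" by blast
      have "y \<in> pw (Suc t) L 0" using y(1) pw0_mono[of t "Suc t"] by auto
      then have "\<forall>x\<in>set xs. \<chi> (x @ y) < r" using bd xs pw0_append by blast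
      then show "z \<in> C" unfolding C_def y(2) \<Phi>_def by auto
    qed
    from L[rule_format, OF this] obtain w c where w: "w \<in> pw t L 1" "\<forall>a\<in>{..<t}. \<Phi> (cmp t w [a]) = c" by blast
    have wa: "\<chi> (x @ cmp t w [a]) = \<chi> (x @ cmp t w [0])" if "x \<in> pw (Suc t) ns 0" "a < t" for x a
    proof -
      have "\<Phi> (cmp t w [a]) = \<Phi> (cmp t w [0])" using w(2) that(2) t by auto
      then show ?thesis using that(1) xs unfolding \<Phi>_def by (auto simp: map_eq_conv)
    qed
    define p0 where "p0 = cmp t w [0]"
    have p0: "p0 \<in> pw (Suc t) L 0" unfolding p0_def using cmp_line_pt[OF w(1) t] pw0_mono[of t "Suc t"] by auto
    have p0s: "set p0 \<subseteq> {..<Suc t}" using p0 unfolding pw0 by auto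
    define \<chi>' where "\<chi>' x = \<chi> (x @ p0)" for x
    have bd': "\<forall>x\<in>pw (Suc t) ns 0. \<chi>' x < r" unfolding \<chi>'_def using bd p0 pw0_append by blast
    define wh where "wh = lift1 t w"
    have wh: "wh \<in> pw (Suc t) L 1" "\<And>a. cmp (Suc t) wh [a] = cmp t w [a]"
      unfolding wh_def using lift1_pw[OF w(1)] lift1_cmp[OF w(1)] by auto
    have monoA: "(\<exists>lne\<in>pw (Suc t) (ns + L) 1. \<forall>a\<le>t. \<chi> (cmp (Suc t) lne [a]) = \<chi> (cmp (Suc t) lne [0]))"
      if "lne \<in> pw (Suc t) ns 1" "\<forall>a\<le>t. \<chi>' (cmp (Suc t) lne [a]) = \<chi>' (cmp (Suc t) lne [0])" for lne
    proof (rule bexI[of _ "lne @ p0"])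
      show "lne @ p0 \<in> pw (Suc t) (ns + L) 1" using pw1_append1[OF that(1) p0] .
      show "\<forall>a\<le>t. \<chi> (cmp (Suc t) (lne @ p0) [a]) = \<chi> (cmp (Suc t) (lne @ p0) [0])"
      proof (intro allI impI)
        fix a assume a: "a \<le> t"
        have e: "cmp (Suc t) (lne @ p0) [b] = cmp (Suc t) lne [b] @ p0" for b using cmp_point[OF p0s] by simp
        have "\<chi>' (cmp (Suc t) lne [a]) = \<chi>' (cmp (Suc t) lne [0])" using that(2) a by blast
        then show "\<chi> (cmp (Suc t) (lne @ p0) [a]) = \<chi> (cmp (Suc t) (lne @ p0) [0])"
          unfolding e \<chi>'_def .
      qed
    qed
    from ns[THEN spec, of \<chi>', THEN mp, OF bd'] show "(\<exists>lne\<in>pw (Suc t) (ns + L) 1. \<forall>a\<le>t. \<chi> (cmp (Suc t) lne [a]) = \<chi> (cmp (Suc t) lne [0])) \<or>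
     (\<exists>F ls. F \<in> pw (Suc t) (ns + L) 0 \<and> length ls = Suc s \<and> distinct (map (\<lambda>lne. \<chi> (cmp (Suc t) lne [0])) ls) \<and>
        (\<forall>lne\<in>set ls. lne \<in> pw (Suc t) (ns + L) 1 \<and> cmp (Suc t) lne [t] = F \<and> (\<forall>a<t. \<chi> (cmp (Suc t) lne [a]) = \<chi> (cmp (Suc t) lne [0]))))"
    proof
      assume "\<exists>lne\<in>pw (Suc t) ns 1. \<forall>a\<le>t. \<chi>' (cmp (Suc t) lne [a]) = \<chi>' (cmp (Suc t) lne [0])"
      then show ?thesis using monoA by blast
    next
      assume "\<exists>F ls. F \<in> pw (Suc t) ns 0 \<and> length ls = s \<and> distinct (map (\<lambda>lne. \<chi>' (cmp (Suc t) lne [0])) ls) \<and>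
        (\<forall>lne\<in>set ls. lne \<in> pw (Suc t) ns 1 \<and> cmp (Suc t) lne [t] = F \<and> (\<forall>a<t. \<chi>' (cmp (Suc t) lne [a]) = \<chi>' (cmp (Suc t) lne [0])))"
      then obtain F ls where F: "F \<in> pw (Suc t) ns 0" "length ls = s" "distinct (map (\<lambda>lne. \<chi>' (cmp (Suc t) lne [0])) ls)"
        "\<And>lne. lne\<in>set ls \<Longrightarrow> lne \<in> pw (Suc t) ns 1 \<and> cmp (Suc t) lne [t] = F \<and> (\<forall>a<t. \<chi>' (cmp (Suc t) lne [a]) = \<chi>' (cmp (Suc t) lne [0]))"
        by blast
      have Fs: "set F \<subseteq> {..<Suc t}" using F(1) unfolding pw0 by auto
      show ?thesis
      proof (cases "\<exists>lne\<in>set ls. \<chi>' F = \<chi>' (cmp (Suc t) lne [0])")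
        case True
        then obtain lne where l: "lne \<in> set ls" "\<chi>' F = \<chi>' (cmp (Suc t) lne [0])" by blast
        have "\<forall>a\<le>t. \<chi>' (cmp (Suc t) lne [a]) = \<chi>' (cmp (Suc t) lne [0])"
          using F(4)[OF l(1)] l(2) by (metis le_neq_implies_less)
        then show ?thesis using monoA F(4)[OF l(1)] by blast
      next
        case False
        define ls' where "ls' = map (\<lambda>lne. lne @ wh) ls @ [F @ wh]"
        define F' where "F' = F @ cmp t w [t]"
        have pt_l: "cmp (Suc t) (lne @ wh) [a] = cmp (Suc t) lne [a] @ cmp t w [a]" for lne a
          using wh(2) by simp
        have colF: "\<chi> (cmp (Suc t) (F @ wh) [a]) = \<chi>' F" if "a < t" for a
        proof -
          have "\<chi> (cmp (Suc t) (F @ wh) [a]) = \<chi> (F @ cmp t w [a])" unfolding pt_l cmp_point[OF Fs] ..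
          also have "\<dots> = \<chi>' F" using wa[OF F(1) that] unfolding \<chi>'_def p0_def .
          finally show ?thesis .
        qed
        have coll: "\<chi> (cmp (Suc t) (lne @ wh) [a]) = \<chi>' (cmp (Suc t) lne [0])" if "lne \<in> set ls" "a < t" for lne a
        proof -
          have l1: "lne \<in> pw (Suc t) ns 1" using F(4)[OF that(1)] by blast
          have "cmp (Suc t) lne [a] \<in> pw (Suc t) ns 0" using cmp_line_pt[OF l1] that(2) by simp
          then have "\<chi> (cmp (Suc t) lne [a] @ cmp t w [a]) = \<chi> (cmp (Suc t) lne [a] @ cmp t w [0])"
            using wa that(2) by blast
          then have "\<chi> (cmp (Suc t) (lne @ wh) [a]) = \<chi>' (cmp (Suc t) lne [a])"
            unfolding pt_l \<chi>'_def p0_def .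
          also have "\<dots> = \<chi>' (cmp (Suc t) lne [0])" using F(4)[OF that(1)] that(2) by blast
          finally show ?thesis .
        qed
        have "map (\<lambda>lne. \<chi> (cmp (Suc t) lne [0])) ls' = map (\<lambda>lne. \<chi>' (cmp (Suc t) lne [0])) ls @ [\<chi>' F]"
          unfolding ls'_def using coll colF t by simp
        then have dist: "distinct (map (\<lambda>lne. \<chi> (cmp (Suc t) lne [0])) ls')"
          using F(3) False by auto
        have mem: "lne' \<in> pw (Suc t) (ns + L) 1 \<and> cmp (Suc t) lne' [t] = F' \<and> (\<forall>a<t. \<chi> (cmp (Suc t) lne' [a]) = \<chi> (cmp (Suc t) lne' [0]))"
          if "lne' \<in> set ls'" for lne'
        proof -
          from that consider (a) lne where "lne \<in> set ls" "lne' = lne @ wh" | (b) "lne' = F @ wh"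
            unfolding ls'_def by auto
          then show ?thesis
          proof cases
            case a
            have l1: "lne \<in> pw (Suc t) ns 1" "cmp (Suc t) lne [t] = F" using F(4)[OF a(1)] by auto
            show ?thesis unfolding a(2) F'_def using pw1_append3[OF l1(1) wh(1)] pt_l l1(2) coll[OF a(1)] t by auto
          next
            case b
            show ?thesis unfolding b F'_def using pw1_append2[OF F(1) wh(1)] pt_l cmp_point[OF Fs] colF t by auto
          qed
        qed
        have len: "length ls' = Suc s" unfolding ls'_def using F(2) by simp
        have F'pw: "F' \<in> pw (Suc t) (ns + L) 0"
        proof -
          have "cmp t w [t] \<in> pw (Suc t) L 0" using w(1) unfolding pw0 pw1 cmp_def by (auto simp: subset_iff)
          then show ?thesis unfolding F'_def using pw0_append[OF F(1)] by blast
        qed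
        show ?thesis apply (rule disjI2, rule exI[of _ F'], rule exI[of _ ls'])
          using mem dist len F'pw by blast
      qed
    qed
  qed
qed

theorem HJ1: "\<exists>n. \<forall>\<chi>::nat list \<Rightarrow> nat. (\<forall>w\<in>pw t n 0. \<chi> w < r) \<longrightarrow> (\<exists>lne\<in>pw t n 1. \<exists>c. \<forall>a\<in>{..<t}. \<chi> (cmp t lne [a]) = c)"
proof (induction t arbitrary: r)
  case 0
  have "[0] \<in> pw 0 1 1" unfolding pw1 by auto
  then show ?case by blast
next
  case (Suc t)
  show ?case
  proof (cases "t = 0")
    case True
    have "[1] \<in> pw 1 1 1" unfolding pw1 by auto
    have "\<forall>\<chi>::nat list \<Rightarrow> nat. \<exists>c. \<forall>a\<in>{..<Suc t}. \<chi> (cmp (Suc t) [1] [a]) = c" using True by auto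
    moreover have "[1] \<in> pw (Suc t) 1 1" using True \<open>[1] \<in> pw 1 1 1\<close> by simp
    ultimately show ?thesis apply (intro exI[of _ 1]) by blast
  next
    case False
    then have t: "0 < t" by simp
    obtain n where n: "\<forall>\<chi>::nat list \<Rightarrow> nat. (\<forall>w\<in>pw (Suc t) n 0. \<chi> w < r) \<longrightarrow> 
     (\<exists>lne\<in>pw (Suc t) n 1. \<forall>a\<le>t. \<chi> (cmp (Suc t) lne [a]) = \<chi> (cmp (Suc t) lne [0])) \<or>
     (\<exists>F ls. F \<in> pw (Suc t) n 0 \<and> length ls = r \<and> distinct (map (\<lambda>lne. \<chi> (cmp (Suc t) lne [0])) ls) \<and>
        (\<forall>lne\<in>set ls. lne \<in> pw (Suc t) n 1 \<and> cmp (Suc t) lne [t] = F \<and> (\<forall>a<t. \<chi> (cmp (Suc t) lne [a]) = \<chi> (cmp (Suc t) lne [0]))))"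
      using focus[OF Suc.IH t, of r r] by blast
    show ?thesis
    proof (intro exI[of _ n] allI impI)
      fix \<chi> :: "nat list \<Rightarrow> nat"
      assume bd: "\<forall>w\<in>pw (Suc t) n 0. \<chi> w < r"
      from n[THEN spec, of \<chi>, THEN mp, OF bd]
      show "\<exists>lne\<in>pw (Suc t) n 1. \<exists>c. \<forall>a\<in>{..<Suc t}. \<chi> (cmp (Suc t) lne [a]) = c"
      proof
        assume "\<exists>lne\<in>pw (Suc t) n 1. \<forall>a\<le>t. \<chi> (cmp (Suc t) lne [a]) = \<chi> (cmp (Suc t) lne [0])"
        then obtain lne where l: "lne\<in>pw (Suc t) n 1" "\<forall>a\<le>t. \<chi> (cmp (Suc t) lne [a]) = \<chi> (cmp (Suc t) lne [0])" by blast
        have "\<forall>a\<in>{..<Suc t}. \<chi> (cmp (Suc t) lne [a]) = \<chi> (cmp (Suc t) lne [0])"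
        proof
          fix a assume "a \<in> {..<Suc t}"
          then have "a \<le> t" by simp
          then show "\<chi> (cmp (Suc t) lne [a]) = \<chi> (cmp (Suc t) lne [0])" using l(2) by blast
        qed
        then show ?thesis using l(1) by blast
      next
        assume "\<exists>F ls. F \<in> pw (Suc t) n 0 \<and> length ls = r \<and> distinct (map (\<lambda>lne. \<chi> (cmp (Suc t) lne [0])) ls) \<and>
        (\<forall>lne\<in>set ls. lne \<in> pw (Suc t) n 1 \<and> cmp (Suc t) lne [t] = F \<and> (\<forall>a<t. \<chi> (cmp (Suc t) lne [a]) = \<chi> (cmp (Suc t) lne [0])))"
        then obtain F ls where F: "F \<in> pw (Suc t) n 0" "length ls = r" "distinct (map (\<lambda>lne. \<chi> (cmp (Suc t) lne [0])) ls)"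
          "\<And>lne. lne\<in>set ls \<Longrightarrow> lne \<in> pw (Suc t) n 1 \<and> cmp (Suc t) lne [t] = F \<and> (\<forall>a<t. \<chi> (cmp (Suc t) lne [a]) = \<chi> (cmp (Suc t) lne [0]))"
          by blast
        define cs where "cs = map (\<lambda>lne. \<chi> (cmp (Suc t) lne [0])) ls"
        have "set cs \<subseteq> {..<r}"
        proof
          fix x assume "x \<in> set cs"
          then obtain lne where l: "lne \<in> set ls" "x = \<chi> (cmp (Suc t) lne [0])" unfolding cs_def by auto
          have "cmp (Suc t) lne [0] \<in> pw (Suc t) n 0" using cmp_line_pt[of lne "Suc t" n 0] F(4)[OF l(1)] by simp
          then show "x \<in> {..<r}" using bd l(2) by auto
        qed
        moreover have "card (set cs) = r" unfolding cs_def using distinct_card[OF F(3)] F(2) by simp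
        ultimately have "set cs = {..<r}" by (metis card_lessThan card_subset_eq finite_lessThan)
        moreover have "\<chi> F < r" using bd F(1) by blast
        ultimately obtain lne where l: "lne \<in> set ls" "\<chi> F = \<chi> (cmp (Suc t) lne [0])" unfolding cs_def by auto
        have "\<forall>a\<in>{..<Suc t}. \<chi> (cmp (Suc t) lne [a]) = \<chi> (cmp (Suc t) lne [0])"
        proof
          fix a assume "a \<in> {..<Suc t}"
          then have "a < t \<or> a = t" by auto
          then show "\<chi> (cmp (Suc t) lne [a]) = \<chi> (cmp (Suc t) lne [0])" using F(4)[OF l(1)] l(2) by auto
        qed
        then show ?thesis using F(4)[OF l(1)] by blast
      qed
    qed
  qed
qed

lemma rigid_append:
  "rigid t (u @ v) \<longleftrightarrow> rigid t u \<and> (\<forall>i<length v. t < v!i \<longrightarrow> v!i - 1 \<in> set u \<union> set (take i v))"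
proof
  assume r: "rigid t (u @ v)"
  have "rigid t u" unfolding rigid_def
  proof (intro allI impI)
    fix i assume "i < length u" "t < u!i"
    then show "u!i - 1 \<in> set (take i u)" using r unfolding rigid_def
      by (auto simp: nth_append dest!: spec[of _ i])
  qed
  moreover have "\<forall>i<length v. t < v!i \<longrightarrow> v!i - 1 \<in> set u \<union> set (take i v)"
  proof (intro allI impI)
    fix i assume i: "i < length v" "t < v!i"
    have "(u@v)!(length u + i) = v!i" by (simp add: nth_append)
    then have "v!i - 1 \<in> set (take (length u + i) (u@v))" using r i unfolding rigid_def
      by (metis add_less_cancel_left length_append)
    then show "v!i - 1 \<in> set u \<union> set (take i v)" by simp
  qed
  ultimately show "rigid t u \<and> (\<forall>i<length v. t < v!i \<longrightarrow> v!i - 1 \<in> set u \<union> set (take i v))" by blast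
next
  assume a: "rigid t u \<and> (\<forall>i<length v. t < v!i \<longrightarrow> v!i - 1 \<in> set u \<union> set (take i v))"
  show "rigid t (u @ v)" unfolding rigid_def
  proof (intro allI impI)
    fix j assume j: "j < length (u @ v)" "t < (u@v)!j"
    show "(u@v)!j - 1 \<in> set (take j (u@v))"
    proof (cases "j < length u")
      case True
      then show ?thesis using a j unfolding rigid_def by (auto simp: nth_append)
    next
      case False
      define i where "i = j - length u"
      have ji: "j = length u + i" "i < length v" using False j(1) i_def by auto
      have "v!i - 1 \<in> set u \<union> set (take i v)" using a ji j(2) by (auto simp: nth_append)
      then show ?thesis using ji by (simp add: nth_append)
    qed
  qed
qed

definition shift :: "nat \<Rightarrow> nat \<Rightarrow> nat list \<Rightarrow> nat list" where
  "shift t s w = map (\<lambda>x. if x < t then x else x + s) w"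

lemma shift_pw:
  assumes G: "G \<in> pw t n m" and l: "lne \<in> pw t L 1"
  shows "lne @ shift t 1 G \<in> pw t (L + n) (Suc m)"
proof (rule pwI)
  show "length (lne @ shift t 1 G) = L + n" using pwD(1)[OF G] pwD(1)[OF l] by (simp add: shift_def)
  show "x < t + Suc m" if "x \<in> set (lne @ shift t 1 G)" for x
    using that pwD(2)[OF G] pwD(2)[OF l] by (fastforce simp: shift_def)
  show "t + j \<in> set (lne @ shift t 1 G)" if "j < Suc m" for j
  proof (cases j)
    case 0 then show ?thesis using pwD(3)[OF l, of 0] by simp
  next
    case (Suc j')
    then have "t + j' \<in> set G" using pwD(3)[OF G, of j'] that by simp
    then have "t + j' + 1 \<in> set (shift t 1 G)" unfolding shift_def by (force simp: image_iff)
    then show ?thesis using Suc by simp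
  qed
  show "rigid t (lne @ shift t 1 G)" unfolding rigid_append
  proof
    show "rigid t lne" using pwD(4)[OF l] .
    show "\<forall>i<length (shift t 1 G). t < shift t 1 G ! i \<longrightarrow> shift t 1 G ! i - 1 \<in> set lne \<union> set (take i (shift t 1 G))"
    proof (intro allI impI)
      fix i assume i: "i < length (shift t 1 G)" "t < shift t 1 G ! i"
      then have il: "i < length G" by (simp add: shift_def)
      have ge: "t \<le> G!i" using i il by (auto simp: shift_def split: if_splits)
      have si: "shift t 1 G ! i = G!i + 1" using il ge by (simp add: shift_def)
      show "shift t 1 G ! i - 1 \<in> set lne \<union> set (take i (shift t 1 G))"
      proof (cases "G!i = t")
        case True then show ?thesis using si pwD(3)[OF l, of 0] by simp
      next
        case False
        then have "G!i - 1 \<in> set (take i G)" using pwD(4)[OF G] il ge unfolding rigid_def by simp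
        moreover have "t \<le> G!i - 1" using False ge by simp
        ultimately have "G!i - 1 + 1 \<in> set (take i (shift t 1 G))" unfolding shift_def take_map
          by (force simp: image_iff)
        then show ?thesis using si False ge by simp
      qed
    qed
  qed
qed

lemma cmp_shift: "cmp t (shift t 1 G) (a # b) = cmp t G b"
  unfolding cmp_def shift_def by (auto intro!: map_cong simp: Suc_diff_le)

lemma cmp_line_Cons: "lne \<in> pw t L 1 \<Longrightarrow> cmp t lne (a # b) = cmp t lne [a]"
  unfolding cmp_def pw1 by (auto intro!: map_cong simp: subset_iff less_Suc_eq)

lemma pw0_Cons: "g \<in> pw t (Suc m) 0 \<Longrightarrow> \<exists>a b. g = a # b \<and> a < t \<and> b \<in> pw t m 0"
  unfolding pw0 by (cases g) auto

theorem HJm: "\<exists>n. \<forall>\<chi>::nat list \<Rightarrow> nat. (\<forall>w\<in>pw t n 0. \<chi> w < r) \<longrightarrow> (\<exists>f\<in>pw t n m. \<exists>c. \<forall>g\<in>pw t m 0. \<chi> (cmp t f g) = c)"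
proof (cases "t = 0")
  case True
  have "pw t m 0 \<subseteq> {[]}" unfolding pw0 True by auto
  have "\<forall>\<chi>::nat list \<Rightarrow> nat. \<exists>c. \<forall>g\<in>pw t m 0. \<chi> (cmp t (idw t m) g) = c"
  proof (intro allI exI ballI)
    fix \<chi> :: "nat list \<Rightarrow> nat" and g assume "g \<in> pw t m 0"
    then have "g = []" using \<open>pw t m 0 \<subseteq> {[]}\<close> by auto
    then show "\<chi> (cmp t (idw t m) g) = \<chi> (cmp t (idw t m) [])" by simp
  qed
  then show ?thesis using idw_pw[of t m] by blast
next
  case False
  then have t: "0 < t" by simp
  show ?thesis
  proof (induction m arbitrary: r)
    case 0
    have "pw t 0 0 = {[]}" unfolding pw0 by auto
    have "\<forall>\<chi>::nat list \<Rightarrow> nat. \<exists>c. \<forall>g\<in>pw t 0 0. \<chi> (cmp t [] g) = c" by simp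
    moreover have "[] \<in> pw t 0 0" by (simp add: pw0)
    ultimately show ?case by blast
  next
    case (Suc m)
    obtain L where L: "\<forall>\<chi>::nat list \<Rightarrow> nat. (\<forall>w\<in>pw t L 0. \<chi> w < r) \<longrightarrow> (\<exists>lne\<in>pw t L 1. \<exists>c. \<forall>a\<in>{..<t}. \<chi> (cmp t lne [a]) = c)"
      using HJ1[of t r] by blast
    define xs where "xs = List.n_lists L [0..<t]"
    have xs: "set xs = pw t L 0" unfolding xs_def n_lists_pw0 ..
    define C where "C = {l. set l \<subseteq> {..<r} \<and> length l = length xs}"
    have fC: "finite C" unfolding C_def by (rule finite_lists_length_eq) simp
    obtain n' where n': "\<forall>\<chi>::nat list \<Rightarrow> nat list. \<chi> ` pw t n' 0 \<subseteq> C \<longrightarrow> (\<exists>f\<in>pw t n' m. \<exists>c. \<forall>g\<in>pw t m 0. \<chi> (cmp t f g) = c)"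
      using gen_col[where D="\<lambda>n. pw t n 0" and S="\<lambda>n. pw t n m" and G="\<lambda>_. pw t m 0" and T="cmp t", OF Suc.IH cmp_pw[of _ t _ m _ 0] fC]
      by blast
    show ?case
    proof (intro exI[of _ "L + n'"] allI impI)
      fix \<chi> :: "nat list \<Rightarrow> nat"
      assume bd: "\<forall>w\<in>pw t (L + n') 0. \<chi> w < r"
      define \<Psi> where "\<Psi> y = map (\<lambda>x. \<chi> (x @ y)) xs" for y
      have "\<Psi> ` pw t n' 0 \<subseteq> C"
      proof
        fix z assume "z \<in> \<Psi> ` pw t n' 0"
        then obtain y where y: "y \<in> pw t n' 0" "z = \<Psi> y" by blast
        have "\<forall>x\<in>set xs. \<chi> (x @ y) < r"
        proof
          fix x assume "x \<in> set xs"
          then have "x @ y \<in> pw t (L + n') 0" using xs pw0_append[OF _ y(1)] by auto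
          then show "\<chi> (x @ y) < r" using bd by blast
        qed
        then show "z \<in> C" unfolding C_def y(2) \<Psi>_def by auto
      qed
      from n'[rule_format, OF this] obtain G c' where G: "G \<in> pw t n' m" "\<forall>g\<in>pw t m 0. \<Psi> (cmp t G g) = c'" by blast
      define b0 where "b0 = replicate m (0::nat)"
      have b0: "b0 \<in> pw t m 0" unfolding b0_def using pw0_ne[OF t] .
      have Gb: "\<chi> (x @ cmp t G b) = \<chi> (x @ cmp t G b0)" if "x \<in> pw t L 0" "b \<in> pw t m 0" for x b
      proof -
        have "\<Psi> (cmp t G b) = \<Psi> (cmp t G b0)" using G(2) that(2) b0 by simp
        then show ?thesis using that(1) xs unfolding \<Psi>_def by (auto simp: map_eq_conv)
      qed
      define \<phi> where "\<phi> x = \<chi> (x @ cmp t G b0)" for x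
      have "\<forall>w\<in>pw t L 0. \<phi> w < r" 
      proof
        fix w assume "w \<in> pw t L 0"
        then have "w @ cmp t G b0 \<in> pw t (L + n') 0" using pw0_append cmp_pw[OF G(1) b0] by blast
        then show "\<phi> w < r" unfolding \<phi>_def using bd by blast
      qed
      from L[THEN spec, of \<phi>, THEN mp, OF this] obtain lne c where l: "lne \<in> pw t L 1" "\<forall>a\<in>{..<t}. \<phi> (cmp t lne [a]) = c" by blast
      show "\<exists>f\<in>pw t (L + n') (Suc m). \<exists>c. \<forall>g\<in>pw t (Suc m) 0. \<chi> (cmp t f g) = c"
      proof (intro bexI[of _ "lne @ shift t 1 G"] exI[of _ c] ballI)
        show "lne @ shift t 1 G \<in> pw t (L + n') (Suc m)" using shift_pw[OF G(1) l(1)] .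
        fix g assume "g \<in> pw t (Suc m) 0"
        then obtain a b where g: "g = a # b" "a < t" "b \<in> pw t m 0" using pw0_Cons by blast
        have e: "cmp t (lne @ shift t 1 G) g = cmp t lne [a] @ cmp t G b"
          using g(1) cmp_shift cmp_line_Cons[OF l(1), of a b] by simp
        have "\<chi> (cmp t lne [a] @ cmp t G b) = \<phi> (cmp t lne [a])" unfolding \<phi>_def using Gb[OF cmp_line_pt[OF l(1) g(2)] g(3)] .
        moreover have "\<phi> (cmp t lne [a]) = c" using l(2) g(2) by blast
        ultimately show "\<chi> (cmp t (lne @ shift t 1 G) g) = c" unfolding e by simp
      qed
    qed
  qed
qed

lemma gen_col2:
  fixes D :: "nat \<Rightarrow> 'a set" and T :: "'b \<Rightarrow> 'd \<Rightarrow> 'a"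
  assumes A: "\<And>r. \<exists>n. \<forall>\<chi>::'a \<Rightarrow> nat. (\<forall>w\<in>D n. \<chi> w < r) \<longrightarrow> (\<exists>f\<in>S n. \<forall>g1\<in>G. \<forall>g2\<in>G. R g1 g2 \<longrightarrow> \<chi> (T f g1) = \<chi> (T f g2))"
    and B: "\<And>n f g. f \<in> S n \<Longrightarrow> g \<in> G \<Longrightarrow> T f g \<in> D n"
    and C: "finite C"
  shows "\<exists>n. \<forall>\<chi>::'a \<Rightarrow> 'c. \<chi> ` D n \<subseteq> C \<longrightarrow> (\<exists>f\<in>S n. \<forall>g1\<in>G. \<forall>g2\<in>G. R g1 g2 \<longrightarrow> \<chi> (T f g1) = \<chi> (T f g2))"
proof -
  obtain h where h: "bij_betw h C {0..<card C}" using ex_bij_betw_finite_nat[OF C] by blast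
  obtain n where n: "\<forall>\<chi>::'a \<Rightarrow> nat. (\<forall>w\<in>D n. \<chi> w < card C) \<longrightarrow> (\<exists>f\<in>S n. \<forall>g1\<in>G. \<forall>g2\<in>G. R g1 g2 \<longrightarrow> \<chi> (T f g1) = \<chi> (T f g2))"
    using A by blast
  show ?thesis
  proof (intro exI allI impI)
    fix \<chi> :: "'a \<Rightarrow> 'c" assume sub: "\<chi> ` D n \<subseteq> C"
    have "\<forall>w\<in>D n. (h \<circ> \<chi>) w < card C"
    proof
      fix w assume "w \<in> D n"
      then have "\<chi> w \<in> C" using sub by auto
      then have "h (\<chi> w) \<in> {0..<card C}" using h by (auto simp: bij_betw_def)
      then show "(h \<circ> \<chi>) w < card C" by simp
    qed
    then obtain f where f: "f \<in> S n" "\<forall>g1\<in>G. \<forall>g2\<in>G. R g1 g2 \<longrightarrow> (h \<circ> \<chi>) (T f g1) = (h \<circ> \<chi>) (T f g2)"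
      using n by blast
    have "\<forall>g1\<in>G. \<forall>g2\<in>G. R g1 g2 \<longrightarrow> \<chi> (T f g1) = \<chi> (T f g2)"
    proof (intro ballI impI)
      fix g1 g2 assume g: "g1 \<in> G" "g2 \<in> G" "R g1 g2"
      have "\<chi> (T f g1) \<in> C" "\<chi> (T f g2) \<in> C" using sub B[OF f(1) g(1)] B[OF f(1) g(2)] by auto
      moreover have "h (\<chi> (T f g1)) = h (\<chi> (T f g2))" using f(2) g by auto
      ultimately show "\<chi> (T f g1) = \<chi> (T f g2)" using h by (meson bij_betw_imp_inj_on inj_on_def)
    qed
    then show "\<exists>f\<in>S n. \<forall>g1\<in>G. \<forall>g2\<in>G. R g1 g2 \<longrightarrow> \<chi> (T f g1) = \<chi> (T f g2)" using f(1) by blast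
  qed
qed

lemma pfx_letters: "set x \<subseteq> {..<t} \<Longrightarrow> pfx t (x @ y) = x @ pfx t y"
  unfolding pfx_def by (auto simp: subset_iff intro: takeWhile_append2)

lemma pfx_nonletter: "t \<in> set x \<Longrightarrow> pfx t (x @ y) = pfx t x"
  unfolding pfx_def by (rule takeWhile_append1) auto

lemma pfx_Cons_t: "pfx t (t # y) = []"
  unfolding pfx_def by simp

lemma pfx_Cons_lt: "a < t \<Longrightarrow> pfx t (a # y) = a # pfx t y"
  unfolding pfx_def by simp

lemma pw1_Cons:
  assumes "g \<in> pw t (Suc N) 1"
  obtains g' where "g = t # g'" "length g' = N"
  | a g' where "g = a # g'" "a < t" "g' \<in> pw t N 1"
proof -
  obtain a g' where g: "g = a # g'" using assms unfolding pw1 by (cases g) auto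
  have a: "a \<le> t" "length g' = N" "set g' \<subseteq> {..<Suc t}" "t \<in> set (a # g')" using assms g unfolding pw1 by auto
  show ?thesis
  proof (cases "a = t")
    case True then show ?thesis using that(1) g a by blast
  next
    case False
    then have "g' \<in> pw t N 1" using a unfolding pw1 by auto
    then show ?thesis using that(2) g a False by auto
  qed
qed

lemma enum_pw1: "\<exists>gs. set gs = pw t N 1"
proof -
  have "pw t N 1 \<subseteq> {w. set w \<subseteq> {..<Suc t} \<and> length w = N}" unfolding pw1 by auto
  then have "finite (pw t N 1)" using finite_subset finite_lists_length_eq[of "{..<Suc t}" N] by blast
  then show ?thesis using finite_list by blast
qed

lemma cmp_line_t: "lne \<in> pw t L 1 \<Longrightarrow> cmp t lne [t] = lne"
  unfolding cmp_def pw1 by (auto intro!: map_idI simp: subset_iff less_Suc_eq)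

lemma cmp_pt_letters: "lne \<in> pw t L 1 \<Longrightarrow> a < t \<Longrightarrow> set (cmp t lne [a]) \<subseteq> {..<t}"
  using cmp_line_pt[of lne t L a] unfolding pw0 by auto

theorem LI:
  assumes t: "0 < t"
  shows "\<exists>M. \<forall>\<psi>::nat list \<Rightarrow> nat. (\<forall>w\<in>UNIV. \<psi> w < r) \<longrightarrow> (\<exists>F\<in>pw t M N. \<forall>g1\<in>pw t N 1. \<forall>g2\<in>pw t N 1.
     length (pfx t g1) = length (pfx t g2) \<longrightarrow> \<psi> (pfx t (cmp t F g1)) = \<psi> (pfx t (cmp t F g2)))"
proof (induction N arbitrary: r)
  case 0
  have "pw t 0 1 = {}" unfolding pw1 by auto
  moreover have "[] \<in> pw t 0 0" by (simp add: pw0)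
  ultimately show ?case by blast
next
  case (Suc N)
  obtain gs where gs: "set gs = pw t N 1" using enum_pw1 by blast
  define C1 where "C1 = {l. set l \<subseteq> {..<r} \<and> length l = length gs}"
  have fC1: "finite C1" unfolding C1_def by (rule finite_lists_length_eq) simp
  obtain L where L: "\<forall>\<chi>::nat list \<Rightarrow> nat list. \<chi> ` pw t L 0 \<subseteq> C1 \<longrightarrow> (\<exists>lne\<in>pw t L 1. \<exists>c. \<forall>a\<in>{..<t}. \<chi> (cmp t lne [a]) = c)"
    using gen_col[where D="\<lambda>n. pw t n 0" and S="\<lambda>n. pw t n 1" and G="\<lambda>_. {..<t}" and T="\<lambda>lne a. cmp t lne [a]", OF HJ1 cmp_line_pt fC1]
    by blast
  define xs where "xs = List.n_lists L [0..<t]"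
  have xs: "set xs = pw t L 0" unfolding xs_def n_lists_pw0 ..
  define C2 where "C2 = {l. set l \<subseteq> {..<r} \<and> length l = length xs}"
  have fC2: "finite C2" unfolding C2_def by (rule finite_lists_length_eq) simp
  have B: "\<And>n f g. f \<in> pw t n N \<Longrightarrow> g \<in> pw t N 1 \<Longrightarrow> pfx t (cmp t f g) \<in> UNIV" by simp
  have "\<exists>M'. \<forall>\<chi>::nat list \<Rightarrow> nat list. \<chi> ` UNIV \<subseteq> C2 \<longrightarrow> (\<exists>F\<in>pw t M' N. \<forall>g1\<in>pw t N 1. \<forall>g2\<in>pw t N 1.
     length (pfx t g1) = length (pfx t g2) \<longrightarrow> \<chi> (pfx t (cmp t F g1)) = \<chi> (pfx t (cmp t F g2)))"
    by (rule gen_col2[where D="\<lambda>_. UNIV" and S="\<lambda>n. pw t n N" and G="pw t N 1" and T="\<lambda>F g. pfx t (cmp t F g)"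
        and R="\<lambda>g1 g2. length (pfx t g1) = length (pfx t g2)", OF Suc.IH B fC2])
  then obtain M' where M': "\<forall>\<chi>::nat list \<Rightarrow> nat list. \<chi> ` UNIV \<subseteq> C2 \<longrightarrow> (\<exists>F\<in>pw t M' N. \<forall>g1\<in>pw t N 1. \<forall>g2\<in>pw t N 1.
     length (pfx t g1) = length (pfx t g2) \<longrightarrow> \<chi> (pfx t (cmp t F g1)) = \<chi> (pfx t (cmp t F g2)))"
    by blast
  show ?case
  proof (intro exI[of _ "L + M'"] allI impI)
    fix \<psi> :: "nat list \<Rightarrow> nat"
    assume bd: "\<forall>w\<in>UNIV. \<psi> w < r"
    define \<psi>' where "\<psi>' y = map (\<lambda>x. \<psi> (x @ y)) xs" for y
    have "\<psi>' ` UNIV \<subseteq> C2" unfolding \<psi>'_def C2_def using bd by auto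
    from M'[THEN spec, of \<psi>', THEN mp, OF this] obtain G where G: "G \<in> pw t M' N"
      "\<forall>g1\<in>pw t N 1. \<forall>g2\<in>pw t N 1. length (pfx t g1) = length (pfx t g2) \<longrightarrow> \<psi>' (pfx t (cmp t G g1)) = \<psi>' (pfx t (cmp t G g2))"
      by blast
    have G2: "\<psi> (x @ pfx t (cmp t G g1)) = \<psi> (x @ pfx t (cmp t G g2))"
      if "x \<in> pw t L 0" "g1 \<in> pw t N 1" "g2 \<in> pw t N 1" "length (pfx t g1) = length (pfx t g2)" for x g1 g2
    proof -
      have "\<psi>' (pfx t (cmp t G g1)) = \<psi>' (pfx t (cmp t G g2))" using G(2) that(2-4) by blast
      then show ?thesis using that(1) xs unfolding \<psi>'_def by (auto simp: map_eq_conv)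
    qed
    define \<Phi> where "\<Phi> x = map (\<lambda>g'. \<psi> (x @ pfx t (cmp t G g'))) gs" for x
    have "\<Phi> ` pw t L 0 \<subseteq> C1" unfolding \<Phi>_def C1_def using bd by auto
    from L[THEN spec, of \<Phi>, THEN mp, OF this] obtain lne c where l: "lne \<in> pw t L 1" "\<forall>a\<in>{..<t}. \<Phi> (cmp t lne [a]) = c"
      by blast
    have la: "\<psi> (cmp t lne [a] @ pfx t (cmp t G g')) = \<psi> (cmp t lne [0] @ pfx t (cmp t G g'))"
      if "a < t" "g' \<in> pw t N 1" for a g'
    proof -
      have "\<Phi> (cmp t lne [a]) = \<Phi> (cmp t lne [0])" using l(2) that(1) t by simp
      then show ?thesis using that(2) gs unfolding \<Phi>_def by (auto simp: map_eq_conv)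
    qed
    define F where "F = lne @ shift t 1 G"
    have F: "F \<in> pw t (L + M') (Suc N)" unfolding F_def using shift_pw[OF G(1) l(1)] .
    have lnt: "t \<in> set lne" using l(1) unfolding pw1 by auto
    have case_t: "pfx t (cmp t F (t # g')) = pfx t lne" for g'
    proof -
      have "cmp t F (t # g') = lne @ cmp t G g'" unfolding F_def
        using cmp_shift[of t G t g'] cmp_line_Cons[OF l(1), of t g'] cmp_line_t[OF l(1)] by simp
      then show ?thesis using pfx_nonletter[OF lnt] by simp
    qed
    have case_a: "pfx t (cmp t F (a # g')) = cmp t lne [a] @ pfx t (cmp t G g')" if "a < t" for a g'
    proof -
      have "cmp t F (a # g') = cmp t lne [a] @ cmp t G g'" unfolding F_def
        using cmp_shift[of t G a g'] cmp_line_Cons[OF l(1), of a g'] by simp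
      then show ?thesis using pfx_letters[OF cmp_pt_letters[OF l(1) that]] by simp
    qed
    show "\<exists>F\<in>pw t (L + M') (Suc N). \<forall>g1\<in>pw t (Suc N) 1. \<forall>g2\<in>pw t (Suc N) 1.
       length (pfx t g1) = length (pfx t g2) \<longrightarrow> \<psi> (pfx t (cmp t F g1)) = \<psi> (pfx t (cmp t F g2))"
    proof (intro bexI[OF _ F] ballI impI)
      fix g1 g2 assume g1: "g1 \<in> pw t (Suc N) 1" and g2: "g2 \<in> pw t (Suc N) 1"
        and len: "length (pfx t g1) = length (pfx t g2)"
      show "\<psi> (pfx t (cmp t F g1)) = \<psi> (pfx t (cmp t F g2))"
      proof (cases rule: pw1_Cons[OF g1])
        case (1 g1')
        then have "length (pfx t g2) = 0" using len by (simp add: pfx_Cons_t)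
        then have "\<exists>g2'. g2 = t # g2'"
          by (cases rule: pw1_Cons[OF g2]) (auto simp: pfx_Cons_lt)
        then show ?thesis using 1 case_t by auto
      next
        case (2 a1 g1')
        then have l1: "length (pfx t g2) = Suc (length (pfx t g1'))" using len by (simp add: pfx_Cons_lt)
        show ?thesis
        proof (cases rule: pw1_Cons[OF g2])
          case (1 g2')
          then show ?thesis using l1 by (simp add: pfx_Cons_t)
        next
          case (2 a2 g2')
          have eq: "length (pfx t g1') = length (pfx t g2')" using l1 2 by (simp add: pfx_Cons_lt)
          have x0: "cmp t lne [0] \<in> pw t L 0" using cmp_line_pt[OF l(1) t] .
          have "\<psi> (pfx t (cmp t F g1)) = \<psi> (cmp t lne [0] @ pfx t (cmp t G g1'))"
            using case_a[of a1 g1'] \<open>g1 = a1 # g1'\<close> \<open>a1 < t\<close> la[of a1 g1'] \<open>g1' \<in> pw t N 1\<close> by simp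
          also have "\<dots> = \<psi> (cmp t lne [0] @ pfx t (cmp t G g2'))"
            using G2[OF x0 \<open>g1' \<in> pw t N 1\<close> \<open>g2' \<in> pw t N 1\<close> eq] .
          also have "\<dots> = \<psi> (pfx t (cmp t F g2))"
            using case_a[of a2 g2'] \<open>g2 = a2 # g2'\<close> \<open>a2 < t\<close> la[of a2 g2'] \<open>g2' \<in> pw t N 1\<close> by simp
          finally show ?thesis .
        qed
      qed
    qed
  qed
qed

lemma pfx_len_lt: "t \<in> set w \<Longrightarrow> length (pfx t w) < length w"
proof -
  assume a: "t \<in> set w"
  have e: "takeWhile (\<lambda>x. x < t) w @ dropWhile (\<lambda>x. x < t) w = w" by simp
  have "dropWhile (\<lambda>x. x < t) w \<noteq> []" using a by (auto simp: dropWhile_eq_Nil_conv)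
  then have "length (takeWhile (\<lambda>x. x < t) w) < length w" using arg_cong[OF e, of length]
    by (metis length_append length_greater_0_conv less_add_same_cancel1)
  then show ?thesis unfolding pfx_def .
qed

lemma pfx_nth_lt: "i < length (pfx t w) \<Longrightarrow> w!i < t"
  unfolding pfx_def by (metis nth_mem set_takeWhileD takeWhile_nth)

lemma pfx_nth_ge: "length (pfx t w) < length w \<Longrightarrow> \<not> w ! length (pfx t w) < t"
  unfolding pfx_def by (rule nth_length_takeWhile)

lemma ivt_nat:
  assumes step: "\<And>j. f (Suc j) \<le> Suc (f j)" and "f 0 \<le> c" "c \<le> f i"
  shows "\<exists>j\<le>i. f j = c"
  using assms(3)
proof (induction i)
  case 0 then show ?case using assms(2) by auto
next
  case (Suc i)
  show ?case
  proof (cases "c \<le> f i")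
    case True then show ?thesis using Suc.IH by (meson le_SucI)
  next
    case False
    then have "f (Suc i) = c" using Suc.prems step[of i] by linarith
    then show ?thesis by blast
  qed
qed

definition cnt :: "nat set \<Rightarrow> nat \<Rightarrow> nat" where
  "cnt S i = card {s\<in>S. s \<le> i}"

lemma cnt_Suc: "finite S \<Longrightarrow> cnt S (Suc i) = cnt S i + (if Suc i \<in> S then 1 else 0)"
proof -
  assume fS: "finite S"
  have "{s\<in>S. s \<le> Suc i} = {s\<in>S. s \<le> i} \<union> (if Suc i \<in> S then {Suc i} else {})" by (auto simp: le_Suc_eq)
  moreover have "Suc i \<notin> {s\<in>S. s \<le> i}" by auto
  ultimately show ?thesis unfolding cnt_def using fS by (auto simp: card_insert_if)
qed

lemma cnt_step: "finite S \<Longrightarrow> cnt S (Suc j) \<le> Suc (cnt S j)"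
  using cnt_Suc[of S j] by auto

lemma cnt_0: "cnt S 0 = (if 0 \<in> S then 1 else 0)"
proof -
  have "{s\<in>S. s \<le> 0} = (if 0 \<in> S then {0} else {})" by auto
  then show ?thesis unfolding cnt_def by simp
qed

lemma cnt_le: "finite S \<Longrightarrow> cnt S i \<le> card S"
  unfolding cnt_def by (rule card_mono) auto

lemma cnt_top: "S \<subseteq> {..<N} \<Longrightarrow> 0 < N \<Longrightarrow> cnt S (N - 1) = card S"
  unfolding cnt_def by (rule arg_cong[of _ _ card]) auto

lemma cnt_notin: "finite S \<Longrightarrow> 0 < p \<Longrightarrow> p \<notin> S \<Longrightarrow> cnt S p = cnt S (p - 1)"
  using cnt_Suc[of S "p - 1"] by simp

definition Emerge :: "nat \<Rightarrow> nat set \<Rightarrow> nat \<Rightarrow> nat list" where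
  "Emerge t S N = map (\<lambda>i. t + cnt S i - 1) [0..<N]"

lemma Emerge_pw:
  assumes t: "0 < t" and S: "S \<subseteq> {..<N}" "card S = m" "0 < m"
  shows "Emerge t S N \<in> pw t N m"
proof (rule pwI)
  have fS: "finite S" using S(1) finite_subset by blast
  have N: "0 < N" using S card_gt_0_iff by fastforce
  show "length (Emerge t S N) = N" unfolding Emerge_def by simp
  show "x < t + m" if xin: "x \<in> set (Emerge t S N)" for x
  proof -
    obtain i where "x = t + cnt S i - 1" using xin unfolding Emerge_def by auto
    moreover have "cnt S i \<le> m" using cnt_le[OF fS] S(2) by metis
    ultimately show ?thesis using t S(3) by linarith
  qed
  show "t + j \<in> set (Emerge t S N)" if "j < m" for j
  proof -
    have "cnt S 0 \<le> Suc j" using cnt_0[of S] by auto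
    moreover have "Suc j \<le> cnt S (N - 1)" using cnt_top[OF S(1) N] S(2) that by simp
    ultimately obtain i where i: "i \<le> N - 1" "cnt S i = Suc j" using ivt_nat[of "cnt S" "Suc j" "N - 1", OF cnt_step[OF fS]] by blast
    then have iN: "i < N" using N by simp
    then have "Emerge t S N ! i = t + j" unfolding Emerge_def using i(2) by simp
    moreover have "i < length (Emerge t S N)" using iN unfolding Emerge_def by simp
    ultimately show ?thesis by (metis nth_mem)
  qed
  show "rigid t (Emerge t S N)" unfolding rigid_def
  proof (intro allI impI)
    fix i assume i: "i < length (Emerge t S N)" "t < Emerge t S N ! i"
    then have iN: "i < N" and ei: "Emerge t S N ! i = t + cnt S i - 1" unfolding Emerge_def by auto
    then have c2: "2 \<le> cnt S i" using i(2) by simp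
    have c0: "cnt S 0 \<le> cnt S i - 1" using cnt_0[of S] c2 by auto
    obtain j where j: "j \<le> i" "cnt S j = cnt S i - 1" using ivt_nat[of "cnt S", OF cnt_step[OF fS] c0 diff_le_self] by blast
    then have ji: "j < i" using c2 by (cases "j = i") auto
    have "Emerge t S N ! j = Emerge t S N ! i - 1" unfolding Emerge_def using ji iN j(2) c2 by simp
    moreover have "j < length (take i (Emerge t S N))" using ji iN unfolding Emerge_def by simp
    ultimately show "Emerge t S N ! i - 1 \<in> set (take i (Emerge t S N))"
      using ji by (metis nth_mem nth_take)
  qed
qed

lemma Emerge_pfx:
  assumes t: "0 < t" and S: "S \<subseteq> {..<N}" "card S = m" "0 < m" and g: "g \<in> pw t m 1"
  shows "length (pfx t (cmp t (Emerge t S N) g)) \<in> S"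
proof -
  have fS: "finite S" using S(1) finite_subset by blast
  have N: "0 < N" using S card_gt_0_iff by fastforce
  define x where "x = cmp t (Emerge t S N) g"
  have lx: "length x = N" unfolding x_def Emerge_def by simp
  have lg: "length g = m" using g unfolding pw1 by auto
  define h where "h c = (if c = 0 then t - 1 else g ! (c - 1))" for c
  have xi: "x ! i = h (cnt S i)" if "i < N" for i
  proof -
    have ei: "Emerge t S N ! i = t + cnt S i - 1" unfolding Emerge_def using that by simp
    have li: "i < length (Emerge t S N)" unfolding Emerge_def using that by simp
    show ?thesis
    proof (cases "cnt S i = 0")
      case True then show ?thesis unfolding x_def h_def cmp_nth[OF li] ei using t by simp
    next
      case False
      then have "\<not> t + cnt S i - 1 < t" by simp
      then show ?thesis unfolding x_def h_def cmp_nth[OF li] ei using False by simp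
    qed
  qed
  have xpw: "x \<in> pw t N 1" unfolding x_def using cmp_pw[OF Emerge_pw[OF t S] g] .
  then have "t \<in> set x" unfolding pw1 by auto
  then have pl: "length (pfx t x) < N" using pfx_len_lt lx by metis
  define p where "p = length (pfx t x)"
  have np: "\<not> x ! p < t" using pfx_nth_ge[of t x] pl lx unfolding p_def by simp
  show ?thesis
  proof (rule ccontr)
    assume pS: "length (pfx t (cmp t (Emerge t S N) g)) \<notin> S"
    then have pS': "p \<notin> S" unfolding p_def x_def .
    have c0: "cnt S p \<noteq> 0"
    proof
      assume "cnt S p = 0"
      then have "x ! p = t - 1" using xi[of p] pl unfolding p_def h_def by simp
      then show False using np t by simp
    qed
    have "p \<noteq> 0"
    proof
      assume "p = 0"
      then show False using c0 pS' cnt_0[of S] by simp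
    qed
    then have "cnt S p = cnt S (p - 1)" using cnt_notin[OF fS _ pS'] by simp
    then have "x ! (p - 1) = x ! p" using xi pl unfolding p_def by simp
    moreover have "x ! (p - 1) < t" using pfx_nth_lt[of "p - 1" t x] \<open>p \<noteq> 0\<close> unfolding p_def by simp
    ultimately show False using np by simp
  qed
qed

lemma pigeon:
  assumes "\<forall>q<N. \<kappa> q < (r::nat)" "r * m < N"
  shows "\<exists>c. m \<le> card {q. q < N \<and> \<kappa> q = c}"
proof (rule ccontr)
  assume "\<not> ?thesis"
  then have lt: "\<forall>c. card {q. q < N \<and> \<kappa> q = c} < m" using not_le by blast
  have "{..<N} \<subseteq> (\<Union>c\<in>{..<r}. {q. q < N \<and> \<kappa> q = c})" using assms(1) by auto
  moreover have "finite (\<Union>c\<in>{..<r}. {q. q < N \<and> \<kappa> q = c})" by auto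
  ultimately have "card {..<N} \<le> card (\<Union>c\<in>{..<r}. {q. q < N \<and> \<kappa> q = c})"
    by (rule card_mono[rotated])
  then have "N \<le> card (\<Union>c\<in>{..<r}. {q. q < N \<and> \<kappa> q = c})" by simp
  also have "\<dots> \<le> (\<Sum>c\<in>{..<r}. card {q. q < N \<and> \<kappa> q = c})" by (rule card_UN_le) simp
  also have "\<dots> \<le> of_nat (card {..<r}) * m" by (rule sum_bounded_above) (use lt less_imp_le in blast)
  finally show False using assms(2) by simp
qed

definition rep :: "nat \<Rightarrow> nat \<Rightarrow> nat \<Rightarrow> nat list" where
  "rep t N q = replicate q 0 @ replicate (N - q) t"

lemma rep_pw: "0 < t \<Longrightarrow> q < N \<Longrightarrow> rep t N q \<in> pw t N 1"
  unfolding rep_def pw1 by auto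

lemma rep_pfx: "0 < t \<Longrightarrow> q < N \<Longrightarrow> length (pfx t (rep t N q)) = q"
proof -
  assume a: "0 < t" "q < N"
  then have "N - q = Suc (N - q - 1)" by simp
  then have "takeWhile (\<lambda>x. x < t) (replicate (N - q) t) = []" by (metis less_irrefl replicate_Suc takeWhile.simps(2))
  moreover have "takeWhile (\<lambda>x. x < t) (replicate q 0 @ replicate (N - q) t) = replicate q 0 @ takeWhile (\<lambda>x. x < t) (replicate (N - q) t)"
    by (rule takeWhile_append2) (use a in auto)
  ultimately show ?thesis unfolding rep_def pfx_def by simp
qed

theorem CS: "\<exists>M. \<forall>\<psi>::nat list \<Rightarrow> nat. (\<forall>w\<in>UNIV. \<psi> w < r) \<longrightarrow> (\<exists>f\<in>pw t M m. \<exists>c. \<forall>g\<in>pw t m 1. \<psi> (pfx t (cmp t f g)) = c)"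
proof (cases "t = 0")
  case True
  have "pfx t w = []" for w unfolding pfx_def True by (cases w) simp_all
  then have "\<forall>\<psi>::nat list \<Rightarrow> nat. \<exists>c. \<forall>g\<in>pw t m 1. \<psi> (pfx t (cmp t (idw t m) g)) = c" by simp
  then show ?thesis using idw_pw[of t m] by blast
next
  case False
  then have t: "0 < t" by simp
  show ?thesis
  proof (cases "m = 0")
    case True
    have "pw t m 1 = {}" unfolding pw1 True by auto
    moreover have "[] \<in> pw t 0 m" unfolding True by (simp add: pw0)
    ultimately show ?thesis by blast
  next
    case False
    then have m: "0 < m" by simp
    define N where "N = Suc (r * m)"
    obtain M where M: "\<forall>\<psi>::nat list \<Rightarrow> nat. (\<forall>w\<in>UNIV. \<psi> w < r) \<longrightarrow> (\<exists>F\<in>pw t M N. \<forall>g1\<in>pw t N 1. \<forall>g2\<in>pw t N 1.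
       length (pfx t g1) = length (pfx t g2) \<longrightarrow> \<psi> (pfx t (cmp t F g1)) = \<psi> (pfx t (cmp t F g2)))"
      using LI[OF t, of r N] by blast
    show ?thesis
    proof (intro exI[of _ M] allI impI)
      fix \<psi> :: "nat list \<Rightarrow> nat"
      assume bd: "\<forall>w\<in>UNIV. \<psi> w < r"
      from M[THEN spec, of \<psi>, THEN mp, OF bd] obtain F where F: "F \<in> pw t M N"
        "\<forall>g1\<in>pw t N 1. \<forall>g2\<in>pw t N 1. length (pfx t g1) = length (pfx t g2) \<longrightarrow> \<psi> (pfx t (cmp t F g1)) = \<psi> (pfx t (cmp t F g2))"
        by blast
      define \<kappa> where "\<kappa> q = \<psi> (pfx t (cmp t F (rep t N q)))" for q
      have kap: "\<psi> (pfx t (cmp t F g)) = \<kappa> (length (pfx t g))" if "g \<in> pw t N 1" for g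
      proof -
        have "t \<in> set g" "length g = N" using that unfolding pw1 by auto
        then have q: "length (pfx t g) < N" using pfx_len_lt by metis
        have "length (pfx t g) = length (pfx t (rep t N (length (pfx t g))))" using rep_pfx[OF t q] by simp
        then show ?thesis unfolding \<kappa>_def using F(2) that rep_pw[OF t q] by blast
      qed
      have "\<forall>q<N. \<kappa> q < r" unfolding \<kappa>_def using bd by auto
      moreover have "r * m < N" unfolding N_def by simp
      ultimately obtain c where c: "m \<le> card {q. q < N \<and> \<kappa> q = c}" using pigeon[of N \<kappa> r m] by blast
      then obtain S where S: "S \<subseteq> {q. q < N \<and> \<kappa> q = c}" "card S = m" "finite S"
        by (rule obtain_subset_with_card_n)
      have S1: "S \<subseteq> {..<N}" using S(1) by auto
      define E where "E = Emerge t S N"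
      have E: "E \<in> pw t N m" unfolding E_def using Emerge_pw[OF t S1 S(2) m] .
      have Fv: "set F \<subseteq> {..<t + length E}" using pwD(2)[OF F(1)] pwD(1)[OF E] by auto
      show "\<exists>f\<in>pw t M m. \<exists>c. \<forall>g\<in>pw t m 1. \<psi> (pfx t (cmp t f g)) = c"
      proof (intro bexI[OF _ cmp_pw[OF F(1) E]] exI[of _ c] ballI)
        fix g assume g: "g \<in> pw t m 1"
        have "cmp t (cmp t F E) g = cmp t F (cmp t E g)" using cmp_assoc[OF Fv] .
        moreover have "cmp t E g \<in> pw t N 1" using cmp_pw[OF E g] .
        moreover have "length (pfx t (cmp t E g)) \<in> S" unfolding E_def using Emerge_pfx[OF t S1 S(2) m g] .
        ultimately show "\<psi> (pfx t (cmp t (cmp t F E) g)) = c" using kap S(1) by auto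
      qed
    qed
  qed
qed

lemma pfx_nonletter2: "\<exists>v\<in>set x. \<not> v < t \<Longrightarrow> pfx t (x @ y) = pfx t x"
proof -
  assume "\<exists>v\<in>set x. \<not> v < t"
  then obtain v where "v \<in> set x" "\<not> v < t" by blast
  then show ?thesis unfolding pfx_def by (rule takeWhile_append1)
qed

lemma pfx_take: "pfx t w = take (length (pfx t w)) w"
  unfolding pfx_def by (metis takeWhile_eq_take)

lemma pfx_letters_set: "set (pfx t w) \<subseteq> {..<t}"
  unfolding pfx_def by (auto dest: set_takeWhileD)

lemma first_param:
  assumes g: "g \<in> pw t M (Suc k)" 
  shows "length (pfx t g) < M" "g ! length (pfx t g) = t"
proof -
  have "t \<in> set g" using pwD(3)[OF g, of 0] by simp
  then show pl: "length (pfx t g) < M" using pfx_len_lt pwD(1)[OF g] by metis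
  define p where "p = length (pfx t g)"
  have ge: "\<not> g ! p < t" using pfx_nth_ge[of t g] pl pwD(1)[OF g] unfolding p_def by simp
  show "g ! length (pfx t g) = t"
  proof (rule ccontr)
    assume "g ! length (pfx t g) \<noteq> t"
    then have gt: "t < g ! p" using ge unfolding p_def by simp
    then have "g ! p - 1 \<in> set (take p g)" using pwD(4)[OF g] pl pwD(1)[OF g] unfolding rigid_def p_def by simp
    then have "g ! p - 1 \<in> set (pfx t g)" using pfx_take[of t g] unfolding p_def by simp
    then have "g ! p - 1 < t" using pfx_letters_set by blast
    then show False using gt by simp
  qed
qed

lemma pfx_split:
  assumes g: "g \<in> pw t M (Suc k)"
  shows "g = pfx t g @ t # drop (Suc (length (pfx t g))) g"
proof -
  have pl: "length (pfx t g) < length g" using first_param(1)[OF g] pwD(1)[OF g] by simp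
  have "g = take (length (pfx t g)) g @ g ! length (pfx t g) # drop (Suc (length (pfx t g))) g"
    using pl by (simp add: id_take_nth_drop)
  then show ?thesis using first_param(2)[OF g] pfx_take[of t g] by simp
qed

definition sig :: "nat \<Rightarrow> nat \<Rightarrow> nat list \<Rightarrow> nat \<Rightarrow> nat" where
  "sig t Q b y = (if y < t then y else if y < t + Q then b ! (y - t) else y - Q)"

definition rho :: "nat \<Rightarrow> nat \<Rightarrow> nat \<Rightarrow> nat" where
  "rho t Q z = (if z < t then z else z + Q)"

lemma L1:
  assumes b: "b \<in> pw t Q 0" and v: "v \<in> pw (t + Q + 1) N k"
  shows "b @ t # map (sig t Q b) v \<in> pw t (Q + 1 + N) (Suc k)"
proof (rule pwI)
  have lb: "length b = Q" and bs: "set b \<subseteq> {..<t}" using b unfolding pw0 by auto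
  show "length (b @ t # map (sig t Q b) v) = Q + 1 + N" using lb pwD(1)[OF v] by simp
  show "x < t + Suc k" if xin: "x \<in> set (b @ t # map (sig t Q b) v)" for x
  proof -
    consider "x \<in> set b" | "x = t" | y where "y \<in> set v" "x = sig t Q b y" using xin by auto
    then show ?thesis
    proof cases
      case 1 then show ?thesis using bs by auto
    next
      case 2 then show ?thesis by simp
    next
      case 3
      have "y < t + Q + 1 + k" using pwD(2)[OF v 3(1)] .
      moreover have "b ! (y - t) < t" if "t \<le> y" "y < t + Q" using that bs lb by (simp add: subset_iff)
      ultimately show ?thesis using 3(2) unfolding sig_def by auto
    qed
  qed
  show "t + j \<in> set (b @ t # map (sig t Q b) v)" if "j < Suc k" for j
  proof (cases j)
    case 0 then show ?thesis by simp
  next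
    case (Suc j')
    then have "t + Q + 1 + j' \<in> set v" using pwD(3)[OF v, of j'] that by simp
    moreover have "sig t Q b (t + Q + 1 + j') = t + j" unfolding sig_def Suc by simp
    ultimately show ?thesis by (metis image_eqI list.set_map set_subset_Cons subsetD Un_iff set_append)
  qed
  show "rigid t (b @ t # map (sig t Q b) v)" unfolding rigid_append
  proof
    show "rigid t b" using bs by (intro rigid_trivial) auto
    show "\<forall>i<length (t # map (sig t Q b) v). t < (t # map (sig t Q b) v) ! i \<longrightarrow>
      (t # map (sig t Q b) v) ! i - 1 \<in> set b \<union> set (take i (t # map (sig t Q b) v))"
    proof (intro allI impI)
      fix i assume i: "i < length (t # map (sig t Q b) v)" "t < (t # map (sig t Q b) v) ! i"
      then obtain i' where i': "i = Suc i'" "i' < length v" by (cases i) auto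
      define y where "y = v ! i'"
      have val: "(t # map (sig t Q b) v) ! i = sig t Q b y" using i' unfolding y_def by simp
      have "y \<in> set v" using i' unfolding y_def by simp
      have bl: "b ! (y - t) < t" if "t \<le> y" "y < t + Q" using that bs lb by (simp add: subset_iff)
      have yge: "t + Q + 1 \<le> y"
      proof (rule ccontr)
        assume "\<not> t + Q + 1 \<le> y"
        then have "sig t Q b y \<le> t" unfolding sig_def using bl by auto
        then show False using i(2) val by simp
      qed
      then have sy: "sig t Q b y = y - Q" unfolding sig_def by simp
      show "(t # map (sig t Q b) v) ! i - 1 \<in> set b \<union> set (take i (t # map (sig t Q b) v))"
      proof (cases "y = t + Q + 1")
        case True
        then have "(t # map (sig t Q b) v) ! i - 1 = t" using val sy by simp
        then show ?thesis using i' by simp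
      next
        case False
        then have "y - 1 \<in> set (take i' v)" using pwD(4)[OF v] i' yge unfolding rigid_def y_def by auto
        then have "sig t Q b (y - 1) \<in> set (take i' (map (sig t Q b) v))" by (simp add: take_map)
        moreover have "sig t Q b (y - 1) = sig t Q b y - 1" using yge False unfolding sig_def by auto
        ultimately show ?thesis using val i' by simp
      qed
    qed
  qed
qed

lemma idw_take: "Suc Q \<le> length g \<Longrightarrow> cmp t (idw t (Suc Q)) g = take (Suc Q) g"
  unfolding cmp_def idw_def by (rule nth_equalityI) (auto simp del: upt_Suc)

lemma L2:
  assumes U: "U \<in> pw (t + Q + 1) N m'"
  shows "idw t (Q + 1) @ U \<in> pw t (Q + 1 + N) (Q + 1 + m')"
proof (rule pwI)
  have I: "idw t (Q + 1) \<in> pw t (Q + 1) (Q + 1)" by (rule idw_pw)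
  show "length (idw t (Q + 1) @ U) = Q + 1 + N" using pwD(1)[OF I] pwD(1)[OF U] by simp
  show "x < t + (Q + 1 + m')" if "x \<in> set (idw t (Q + 1) @ U)" for x
    using that pwD(2)[OF I] pwD(2)[OF U] by fastforce
  show "t + j \<in> set (idw t (Q + 1) @ U)" if "j < Q + 1 + m'" for j
  proof (cases "j < Q + 1")
    case True then show ?thesis using pwD(3)[OF I] by auto
  next
    case False
    then have "t + Q + 1 + (j - (Q + 1)) \<in> set U" using pwD(3)[OF U, of "j - (Q+1)"] that by simp
    then show ?thesis using False by simp
  qed
  show "rigid t (idw t (Q + 1) @ U)" unfolding rigid_append
  proof
    show "rigid t (idw t (Q + 1))" using pwD(4)[OF I] .
    show "\<forall>i<length U. t < U ! i \<longrightarrow> U ! i - 1 \<in> set (idw t (Q + 1)) \<union> set (take i U)"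
    proof (intro allI impI)
      fix i assume i: "i < length U" "t < U ! i"
      show "U ! i - 1 \<in> set (idw t (Q + 1)) \<union> set (take i U)"
      proof (cases "U ! i \<le> t + Q + 1")
        case True
        then have "U ! i - 1 = t + (U ! i - 1 - t)" "U ! i - 1 - t < Q + 1" using i(2) by auto
        then have "U ! i - 1 \<in> set (idw t (Q + 1))" using pwD(3)[OF I, of "U ! i - 1 - t"] by simp
        then show ?thesis by simp
      next
        case False
        then show ?thesis using pwD(4)[OF U] i(1) unfolding rigid_def by auto
      qed
    qed
  qed
qed

lemma L3:
  assumes U: "U \<in> pw (t + Q + 1) N m'" and b: "length b = Q" and g': "length g' = m'"
  shows "cmp t (idw t (Q + 1) @ U) (b @ t # g') = b @ t # map (sig t Q b) (cmp (t + Q + 1) U (map (rho t Q) g'))"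
proof -
  have "cmp t (idw t (Q + 1)) (b @ t # g') = take (Suc Q) (b @ t # g')" using idw_take[of Q "b @ t # g'" t] b by simp
  also have "\<dots> = b @ [t]" using b by simp
  finally have e1: "cmp t (idw t (Q + 1)) (b @ t # g') = b @ [t]" .
  have e2: "cmp t U (b @ t # g') = map (sig t Q b) (cmp (t + Q + 1) U (map (rho t Q) g'))"
    unfolding cmp_def map_map
  proof (rule map_cong[OF refl])
    fix y assume y: "y \<in> set U"
    have yb: "y < t + Q + 1 + m'" using pwD(2)[OF U y] .
    show "(if y < t then y else (b @ t # g') ! (y - t)) =
      (sig t Q b \<circ> (\<lambda>x. if x < t + Q + 1 then x else map (rho t Q) g' ! (x - (t + Q + 1)))) y"
    proof -
      consider "y < t" | "t \<le> y" "y < t + Q" | "y = t + Q" | "t + Q + 1 \<le> y" by linarith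
      then show ?thesis
      proof cases
        case 1 then show ?thesis unfolding sig_def by simp
      next
        case 2
        then have "y - t < Q" by simp
        then show ?thesis unfolding sig_def using b 2 by (simp add: nth_append)
      next
        case 3 then show ?thesis unfolding sig_def using b by (simp add: nth_append)
      next
        case 4
        define z where "z = g' ! (y - (t + Q + 1))"
        have il: "y - (t + Q + 1) < length g'" using yb g' 4 by simp
        have yy: "y - t = length b + Suc (y - (t + Q + 1))" using b 4 by simp
        have "(b @ t # g') ! (y - t) = z" unfolding z_def yy by (simp only: nth_append_length_plus nth_Cons_Suc)
        moreover have "map (rho t Q) g' ! (y - (t + Q + 1)) = rho t Q z" unfolding z_def using il by simp
        moreover have "sig t Q b (rho t Q z) = z" unfolding sig_def rho_def by auto
        ultimately show ?thesis using 4 by simp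
      qed
    qed
  qed
  show ?thesis using e1 e2 by simp
qed

lemma L4:
  assumes g: "b @ t # g' \<in> pw t M' (Suc k)" and b: "set b \<subseteq> {..<t}" "length b = Q"
  shows "map (rho t Q) g' \<in> pw (t + Q + 1) (length g') k"
proof (rule pwI)
  show "length (map (rho t Q) g') = length g'" by simp
  show "x < t + Q + 1 + k" if xin: "x \<in> set (map (rho t Q) g')" for x
  proof -
    obtain z where z: "z \<in> set g'" "x = rho t Q z" using xin by auto
    have "z < t + Suc k" using pwD(2)[OF g] z(1) by simp
    then show ?thesis using z(2) unfolding rho_def by auto
  qed
  show "t + Q + 1 + j \<in> set (map (rho t Q) g')" if "j < k" for j
  proof -
    have "t + Suc j \<in> set (b @ t # g')" using pwD(3)[OF g, of "Suc j"] that by simp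
    moreover have "t + Suc j \<notin> set b" using b by auto
    ultimately have "t + Suc j \<in> set g'" by simp
    moreover have "rho t Q (t + Suc j) = t + Q + 1 + j" unfolding rho_def by simp
    ultimately show ?thesis by (metis image_eqI set_map)
  qed
  show "rigid (t + Q + 1) (map (rho t Q) g')" unfolding rigid_def
  proof (intro allI impI)
    fix i assume i: "i < length (map (rho t Q) g')" "t + Q + 1 < map (rho t Q) g' ! i"
    define z where "z = g' ! i"
    have il: "i < length g'" using i by simp
    have rz: "map (rho t Q) g' ! i = rho t Q z" unfolding z_def using il by simp
    have zt: "t + 1 < z" using i(2) rz unfolding rho_def by (auto split: if_splits)
    have pos: "(b @ t # g') ! (Q + 1 + i) = z" unfolding z_def using b by (simp add: nth_append)
    have li: "Q + 1 + i < length (b @ t # g')" using il b by simp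
    have "t < (b @ t # g') ! (Q + 1 + i)" using pos zt by simp
    then have "(b @ t # g') ! (Q + 1 + i) - 1 \<in> set (take (Q + 1 + i) (b @ t # g'))"
      using pwD(4)[OF g] li unfolding rigid_def by blast
    then have "z - 1 \<in> set (take (Q + 1 + i) (b @ t # g'))" using pos by simp
    moreover have "take (Q + 1 + i) (b @ t # g') = b @ t # take i g'" using b by simp
    ultimately have "z - 1 \<in> set (b @ t # take i g')" by metis
    moreover have "z - 1 \<notin> set b" "z - 1 \<noteq> t" using b zt by auto
    ultimately have "z - 1 \<in> set (take i g')" by simp
    then have "rho t Q (z - 1) \<in> set (take i (map (rho t Q) g'))" by (simp add: take_map)
    moreover have "rho t Q (z - 1) = rho t Q z - 1" using zt unfolding rho_def by auto
    ultimately show "map (rho t Q) g' ! i - 1 \<in> set (take i (map (rho t Q) g'))" using rz by simp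
  qed
qed

definition Hp :: "nat \<Rightarrow> nat \<Rightarrow> (nat list \<Rightarrow> nat) \<Rightarrow> nat list \<Rightarrow> nat \<Rightarrow> nat \<Rightarrow> bool" where
  "Hp t k \<chi> f M Q \<longleftrightarrow> (\<forall>g1\<in>pw t M (Suc k). \<forall>g2\<in>pw t M (Suc k). pfx t g1 = pfx t g2 \<longrightarrow> length (pfx t g1) < Q \<longrightarrow> \<chi> (cmp t f g1) = \<chi> (cmp t f g2))"

lemma stage1_step:
  assumes IH: "\<And>t' m' r'. \<exists>n. \<forall>\<chi>::nat list \<Rightarrow> nat. (\<forall>w\<in>pw t' n k. \<chi> w < r') \<longrightarrow> (\<exists>f\<in>pw t' n m'. \<exists>c. \<forall>g\<in>pw t' m' k. \<chi> (cmp t' f g) = c)"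
    and M': "Q + 1 \<le> M'"
  shows "\<exists>M. Q + 1 \<le> M \<and> (\<forall>\<chi> n f. (\<forall>w\<in>pw t n (Suc k). \<chi> w < r) \<longrightarrow> f \<in> pw t n M \<longrightarrow> Hp t k \<chi> f M Q \<longrightarrow> (\<exists>f'\<in>pw t n M'. Hp t k \<chi> f' M' (Suc Q)))"
proof -
  define t' where "t' = t + Q + 1"
  define m' where "m' = M' - (Q + 1)"
  have M'm: "M' = Q + 1 + m'" using M' unfolding m'_def by simp
  define bs where "bs = List.n_lists Q [0..<t]"
  have bs: "set bs = pw t Q 0" unfolding bs_def n_lists_pw0 ..
  define C where "C = {l. set l \<subseteq> {..<r} \<and> length l = length bs}"
  have fC: "finite C" unfolding C_def by (rule finite_lists_length_eq) simp
  have "\<exists>N. \<forall>\<chi>::nat list \<Rightarrow> nat list. \<chi> ` pw t' N k \<subseteq> C \<longrightarrow> (\<exists>f\<in>pw t' N m'. \<exists>c. \<forall>g\<in>pw t' m' k. \<chi> (cmp t' f g) = c)"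
    by (rule gen_col[where D="\<lambda>n. pw t' n k" and S="\<lambda>n. pw t' n m'" and G="\<lambda>_. pw t' m' k" and T="cmp t'", OF IH cmp_pw[of _ t' _ m' _ k] fC])
  then obtain N where N: "\<forall>\<chi>::nat list \<Rightarrow> nat list. \<chi> ` pw t' N k \<subseteq> C \<longrightarrow> (\<exists>f\<in>pw t' N m'. \<exists>c. \<forall>g\<in>pw t' m' k. \<chi> (cmp t' f g) = c)"
    by blast
  define M where "M = Q + 1 + N"
  show ?thesis
  proof (intro exI[of _ M] conjI allI impI)
    show "Q + 1 \<le> M" unfolding M_def by simp
    fix \<chi> :: "nat list \<Rightarrow> nat" and n f
    assume bd: "\<forall>w\<in>pw t n (Suc k). \<chi> w < r" and f: "f \<in> pw t n M" and H: "Hp t k \<chi> f M Q"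
    define \<Psi> where "\<Psi> v = map (\<lambda>b. \<chi> (cmp t f (b @ t # map (sig t Q b) v))) bs" for v
    have "\<Psi> ` pw t' N k \<subseteq> C"
    proof
      fix z assume "z \<in> \<Psi> ` pw t' N k"
      then obtain v where v: "v \<in> pw t' N k" "z = \<Psi> v" by blast
      have "\<chi> (cmp t f (b @ t # map (sig t Q b) v)) < r" if "b \<in> set bs" for b
      proof -
        have "b @ t # map (sig t Q b) v \<in> pw t M (Suc k)" unfolding M_def
          using L1[of b t Q v N k] that bs v(1) unfolding t'_def by simp
        then have "cmp t f (b @ t # map (sig t Q b) v) \<in> pw t n (Suc k)" using cmp_pw[OF f] by blast
        then show ?thesis using bd by blast
      qed
      then show "z \<in> C" unfolding C_def v(2) \<Psi>_def by auto
    qed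
    from N[THEN spec, of \<Psi>, THEN mp, OF this] obtain U c where U: "U \<in> pw t' N m'" "\<forall>h\<in>pw t' m' k. \<Psi> (cmp t' U h) = c"
      by blast
    define E where "E = idw t (Q + 1) @ U"
    have E: "E \<in> pw t M M'" unfolding E_def M_def M'm using L2[of U t Q N m'] U(1) unfolding t'_def by simp
    have fv: "set f \<subseteq> {..<t + length E}" using pwD(2)[OF f] pwD(1)[OF E] by auto
    show "\<exists>f'\<in>pw t n M'. Hp t k \<chi> f' M' (Suc Q)"
    proof (rule bexI[OF _ cmp_pw[OF f E]])
      show "Hp t k \<chi> (cmp t f E) M' (Suc Q)" unfolding Hp_def
      proof (intro ballI impI)
        fix g1 g2 assume g1: "g1 \<in> pw t M' (Suc k)" and g2: "g2 \<in> pw t M' (Suc k)"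
          and pe: "pfx t g1 = pfx t g2" and pl: "length (pfx t g1) < Suc Q"
        define b where "b = pfx t g1"
        have bl: "set b \<subseteq> {..<t}" unfolding b_def by (rule pfx_letters_set)
        define g1' where "g1' = drop (Suc (length b)) g1"
        define g2' where "g2' = drop (Suc (length b)) g2"
        have s1: "g1 = b @ t # g1'" unfolding g1'_def b_def using pfx_split[OF g1] .
        have s2: "g2 = b @ t # g2'" unfolding g2'_def b_def using pfx_split[OF g2] pe by simp
        have as1: "cmp t (cmp t f E) g1 = cmp t f (cmp t E g1)" using cmp_assoc[OF fv] .
        have as2: "cmp t (cmp t f E) g2 = cmp t f (cmp t E g2)" using cmp_assoc[OF fv] .
        have lg1: "length g1 = M'" using pwD(1)[OF g1] .
        have lg2: "length g2 = M'" using pwD(1)[OF g2] .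
        show "\<chi> (cmp t (cmp t f E) g1) = \<chi> (cmp t (cmp t f E) g2)"
        proof (cases "length b < Q")
          case True
          have ce: "\<exists>Y. cmp t E (b @ t # g') = b @ t # Y" if "length (b @ t # g') = M'" for g'
          proof -
            have A: "cmp t E (b @ t # g') = take (Suc Q) (b @ t # g') @ cmp t U (b @ t # g')"
              unfolding E_def using idw_take[of Q "b @ t # g'" t] that M' by simp
            have B: "take (Suc Q) (b @ t # g') = b @ t # take (Q - length b) g'"
              using True by (simp add: Suc_diff_le)
            have "cmp t E (b @ t # g') = b @ t # (take (Q - length b) g' @ cmp t U (b @ t # g'))"
              by (simp only: A B append.assoc append_Cons)
            then show ?thesis by blast
          qed
          have "length (b @ t # g1') = M'" using s1 lg1 by simp
          then obtain Y1 where Y1: "cmp t E g1 = b @ t # Y1" using ce[of g1'] s1 by metis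
          have "length (b @ t # g2') = M'" using s2 lg2 by simp
          then obtain Y2 where Y2: "cmp t E g2 = b @ t # Y2" using ce[of g2'] s2 by metis
          have p1: "pfx t (cmp t E g1) = b" unfolding Y1 using pfx_letters[OF bl, of "t # Y1"] pfx_Cons_t by simp
          have p2: "pfx t (cmp t E g2) = b" unfolding Y2 using pfx_letters[OF bl, of "t # Y2"] pfx_Cons_t by simp
          have q1: "pfx t (cmp t E g1) = pfx t (cmp t E g2)" using p1 p2 by simp
          have q2: "length (pfx t (cmp t E g1)) < Q" using p1 True by simp
          have "\<chi> (cmp t f (cmp t E g1)) = \<chi> (cmp t f (cmp t E g2))"
            using H[unfolded Hp_def, rule_format, OF cmp_pw[OF E g1] cmp_pw[OF E g2] q1 q2] .
          then show ?thesis using as1 as2 by simp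
        next
          case False
          then have lb: "length b = Q" using pl unfolding b_def by simp
          have l1': "length g1' = m'" using arg_cong[OF s1, of length] lg1 lb M'm by simp
          have l2': "length g2' = m'" using arg_cong[OF s2, of length] lg2 lb M'm by simp
          have e1: "cmp t E g1 = b @ t # map (sig t Q b) (cmp t' U (map (rho t Q) g1'))"
            unfolding E_def s1 t'_def using L3[of U t Q N m' b g1'] U(1) lb l1' unfolding t'_def by simp
          have e2: "cmp t E g2 = b @ t # map (sig t Q b) (cmp t' U (map (rho t Q) g2'))"
            unfolding E_def s2 t'_def using L3[of U t Q N m' b g2'] U(1) lb l2' unfolding t'_def by simp
          have h1: "map (rho t Q) g1' \<in> pw t' m' k" using L4[of b t g1' M' k Q] g1 s1 bl lb l1' unfolding t'_def by simp
          have h2: "map (rho t Q) g2' \<in> pw t' m' k" using L4[of b t g2' M' k Q] g2 s2 bl lb l2' unfolding t'_def by simp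
          have "\<Psi> (cmp t' U (map (rho t Q) g1')) = \<Psi> (cmp t' U (map (rho t Q) g2'))" using U(2) h1 h2 by simp
          moreover have "b \<in> set bs" using bs bl lb unfolding pw0 by auto
          ultimately have "\<chi> (cmp t f (b @ t # map (sig t Q b) (cmp t' U (map (rho t Q) g1')))) =
             \<chi> (cmp t f (b @ t # map (sig t Q b) (cmp t' U (map (rho t Q) g2'))))"
            unfolding \<Psi>_def by (auto simp: map_eq_conv)
          then show ?thesis using as1 as2 e1 e2 by simp
        qed
      qed
    qed
  qed
qed

lemma stage1_iter:
  assumes IH: "\<And>t' m' r'. \<exists>n. \<forall>\<chi>::nat list \<Rightarrow> nat. (\<forall>w\<in>pw t' n k. \<chi> w < r') \<longrightarrow> (\<exists>f\<in>pw t' n m'. \<exists>c. \<forall>g\<in>pw t' m' k. \<chi> (cmp t' f g) = c)"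
  shows "\<forall>Q M'. Q + d \<le> M' \<longrightarrow> (\<exists>M. Q \<le> M \<and> (\<forall>\<chi> n f. (\<forall>w\<in>pw t n (Suc k). \<chi> w < r) \<longrightarrow> f \<in> pw t n M \<longrightarrow> Hp t k \<chi> f M Q \<longrightarrow> (\<exists>f'\<in>pw t n M'. Hp t k \<chi> f' M' (Q + d))))"
proof (induction d)
  case 0
  show ?case
  proof (intro allI impI)
    fix Q M' :: nat assume "Q + 0 \<le> M'"
    then have "Q \<le> M'" by simp
    moreover have "\<forall>\<chi> n f. (\<forall>w\<in>pw t n (Suc k). \<chi> w < r) \<longrightarrow> f \<in> pw t n M' \<longrightarrow> Hp t k \<chi> f M' Q \<longrightarrow> (\<exists>f'\<in>pw t n M'. Hp t k \<chi> f' M' (Q + 0))"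
    proof (intro allI impI)
      fix \<chi> n f assume "f \<in> pw t n M'" "Hp t k \<chi> f M' Q"
      then show "\<exists>f'\<in>pw t n M'. Hp t k \<chi> f' M' (Q + 0)" by (intro bexI[of _ f]) simp_all
    qed
    ultimately show "\<exists>M. Q \<le> M \<and> (\<forall>\<chi> n f. (\<forall>w\<in>pw t n (Suc k). \<chi> w < r) \<longrightarrow> f \<in> pw t n M \<longrightarrow> Hp t k \<chi> f M Q \<longrightarrow> (\<exists>f'\<in>pw t n M'. Hp t k \<chi> f' M' (Q + 0)))"
      by (intro exI[of _ M'] conjI)
  qed
next
  case (Suc d)
  show ?case
  proof (intro allI impI)
    fix Q M' :: nat assume QM: "Q + Suc d \<le> M'"
    then have "Q + 1 + d \<le> M'" by simp
    then obtain M1 where M1: "Q + 1 \<le> M1" "\<forall>\<chi> n f. (\<forall>w\<in>pw t n (Suc k). \<chi> w < r) \<longrightarrow> f \<in> pw t n M1 \<longrightarrow> Hp t k \<chi> f M1 (Q + 1) \<longrightarrow> (\<exists>f'\<in>pw t n M'. Hp t k \<chi> f' M' (Q + 1 + d))"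
      using Suc.IH[THEN spec, of "Q + 1", THEN spec, of M', THEN mp] by blast
    obtain M where M: "Q + 1 \<le> M" "\<forall>\<chi> n f. (\<forall>w\<in>pw t n (Suc k). \<chi> w < r) \<longrightarrow> f \<in> pw t n M \<longrightarrow> Hp t k \<chi> f M Q \<longrightarrow> (\<exists>f'\<in>pw t n M1. Hp t k \<chi> f' M1 (Suc Q))"
      using stage1_step[OF IH M1(1), where r=r and t=t] by blast
    show "\<exists>M. Q \<le> M \<and> (\<forall>\<chi> n f. (\<forall>w\<in>pw t n (Suc k). \<chi> w < r) \<longrightarrow> f \<in> pw t n M \<longrightarrow> Hp t k \<chi> f M Q \<longrightarrow> (\<exists>f'\<in>pw t n M'. Hp t k \<chi> f' M' (Q + Suc d)))"
    proof (intro exI[of _ M] conjI allI impI)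
      show "Q \<le> M" using M(1) by simp
      fix \<chi> n f assume bd: "\<forall>w\<in>pw t n (Suc k). \<chi> w < r" and f: "f \<in> pw t n M" and H: "Hp t k \<chi> f M Q"
      obtain f1 where f1: "f1 \<in> pw t n M1" "Hp t k \<chi> f1 M1 (Suc Q)" using M(2)[THEN spec, of \<chi>, THEN spec, of n, THEN spec, of f, THEN mp, OF bd, THEN mp, OF f, THEN mp, OF H] by blast
      then have "Hp t k \<chi> f1 M1 (Q + 1)" by simp
      then obtain f' where "f' \<in> pw t n M'" "Hp t k \<chi> f' M' (Q + 1 + d)" using M1(2)[THEN spec, of \<chi>, THEN spec, of n, THEN spec, of f1, THEN mp, OF bd, THEN mp, OF f1(1), THEN mp] by blast
      then show "\<exists>f'\<in>pw t n M'. Hp t k \<chi> f' M' (Q + Suc d)" by auto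
    qed
  qed
qed

lemma stage1:
  assumes IH: "\<And>t' m' r'. \<exists>n. \<forall>\<chi>::nat list \<Rightarrow> nat. (\<forall>w\<in>pw t' n k. \<chi> w < r') \<longrightarrow> (\<exists>f\<in>pw t' n m'. \<exists>c. \<forall>g\<in>pw t' m' k. \<chi> (cmp t' f g) = c)"
  shows "\<exists>n. \<forall>\<chi>::nat list \<Rightarrow> nat. (\<forall>w\<in>pw t n (Suc k). \<chi> w < r) \<longrightarrow> (\<exists>f\<in>pw t n Mf. \<forall>g1\<in>pw t Mf (Suc k). \<forall>g2\<in>pw t Mf (Suc k). pfx t g1 = pfx t g2 \<longrightarrow> \<chi> (cmp t f g1) = \<chi> (cmp t f g2))"
proof -
  obtain M where M: "\<forall>\<chi> n f. (\<forall>w\<in>pw t n (Suc k). \<chi> w < r) \<longrightarrow> f \<in> pw t n M \<longrightarrow> Hp t k \<chi> f M 0 \<longrightarrow> (\<exists>f'\<in>pw t n Mf. Hp t k \<chi> f' Mf (0 + Mf))"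
  proof -
    have "0 + Mf \<le> Mf" by simp
    from stage1_iter[OF IH, where d=Mf and r=r and t=t, THEN spec, of 0, THEN spec, of Mf, THEN mp, OF this]
    show ?thesis using that by blast
  qed
  show ?thesis
  proof (intro exI[of _ M] allI impI)
    fix \<chi> :: "nat list \<Rightarrow> nat" assume bd: "\<forall>w\<in>pw t M (Suc k). \<chi> w < r"
    have "Hp t k \<chi> (idw t M) M 0" unfolding Hp_def by simp
    from M[THEN spec, of \<chi>, THEN spec, of M, THEN spec, of "idw t M", THEN mp, OF bd, THEN mp, OF idw_pw, THEN mp, OF this]
    obtain f where f: "f \<in> pw t M Mf" "Hp t k \<chi> f Mf Mf" by auto
    have "\<forall>g1\<in>pw t Mf (Suc k). \<forall>g2\<in>pw t Mf (Suc k). pfx t g1 = pfx t g2 \<longrightarrow> \<chi> (cmp t f g1) = \<chi> (cmp t f g2)"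
    proof (intro ballI impI)
      fix g1 g2 assume g: "g1 \<in> pw t Mf (Suc k)" "g2 \<in> pw t Mf (Suc k)" "pfx t g1 = pfx t g2"
      have "length (pfx t g1) < Mf" using first_param(1)[OF g(1)] .
      then show "\<chi> (cmp t f g1) = \<chi> (cmp t f g2)" using f(2)[unfolded Hp_def, rule_format, OF g] by simp
    qed
    then show "\<exists>f\<in>pw t M Mf. \<forall>g1\<in>pw t Mf (Suc k). \<forall>g2\<in>pw t Mf (Suc k). pfx t g1 = pfx t g2 \<longrightarrow> \<chi> (cmp t f g1) = \<chi> (cmp t f g2)"
      using f(1) by blast
  qed
qed

definition coll :: "nat \<Rightarrow> nat list \<Rightarrow> nat list" where
  "coll t g = map (\<lambda>x. if x < t then x else t) g"

lemma coll_pw: "g \<in> pw t m (Suc k) \<Longrightarrow> coll t g \<in> pw t m 1"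
proof -
  assume g: "g \<in> pw t m (Suc k)"
  have "t \<in> set g" using pwD(3)[OF g, of 0] by simp
  then have "t \<in> set (coll t g)" unfolding coll_def by (force simp: image_iff)
  then show ?thesis unfolding pw1 coll_def using pwD(1)[OF g] by auto
qed

lemma pfx_coll: "pfx t (map (\<lambda>x. if x < t then x else t) w) = pfx t w"
  by (induction w) (auto simp: pfx_def)

lemma coll_pfx:
  assumes "set f \<subseteq> {..<t + length g}"
  shows "pfx t (cmp t f (coll t g)) = pfx t (cmp t f g)"
proof -
  have "cmp t f (coll t g) = map (\<lambda>x. if x < t then x else t) (cmp t f g)"
    unfolding cmp_def coll_def using assms by (auto simp: subset_iff intro!: map_cong)
  then show ?thesis using pfx_coll by simp
qed

theorem GR: "\<exists>n. \<forall>\<chi>::nat list \<Rightarrow> nat. (\<forall>w\<in>pw t n k. \<chi> w < r) \<longrightarrow> (\<exists>f\<in>pw t n m. \<exists>c. \<forall>g\<in>pw t m k. \<chi> (cmp t f g) = c)"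
proof (induction k arbitrary: t m r)
  case 0
  show ?case using HJm .
next
  case (Suc k)
  obtain Mf where Mf: "\<forall>\<psi>::nat list \<Rightarrow> nat. (\<forall>w\<in>UNIV. \<psi> w < Suc r) \<longrightarrow> (\<exists>f\<in>pw t Mf m. \<exists>c. \<forall>g\<in>pw t m 1. \<psi> (pfx t (cmp t f g)) = c)"
    using CS[where r="Suc r" and t=t and m=m] by blast
  obtain n where n: "\<forall>\<chi>::nat list \<Rightarrow> nat. (\<forall>w\<in>pw t n (Suc k). \<chi> w < r) \<longrightarrow> (\<exists>f\<in>pw t n Mf. \<forall>g1\<in>pw t Mf (Suc k). \<forall>g2\<in>pw t Mf (Suc k). pfx t g1 = pfx t g2 \<longrightarrow> \<chi> (cmp t f g1) = \<chi> (cmp t f g2))"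
    using stage1[OF Suc.IH, where t=t and r=r and Mf=Mf] by blast
  show ?case
  proof (intro exI[of _ n] allI impI)
    fix \<chi> :: "nat list \<Rightarrow> nat" assume bd: "\<forall>w\<in>pw t n (Suc k). \<chi> w < r"
    from n[THEN spec, of \<chi>, THEN mp, OF bd] obtain f0 where f0: "f0 \<in> pw t n Mf"
      "\<forall>g1\<in>pw t Mf (Suc k). \<forall>g2\<in>pw t Mf (Suc k). pfx t g1 = pfx t g2 \<longrightarrow> \<chi> (cmp t f0 g1) = \<chi> (cmp t f0 g2)"
      by blast
    define \<psi> where "\<psi> b = (if \<exists>g\<in>pw t Mf (Suc k). pfx t g = b then \<chi> (cmp t f0 (SOME g. g \<in> pw t Mf (Suc k) \<and> pfx t g = b)) else r)" for b
    have psi: "\<psi> (pfx t h) = \<chi> (cmp t f0 h)" if h: "h \<in> pw t Mf (Suc k)" for h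
    proof -
      have ex: "\<exists>g. g \<in> pw t Mf (Suc k) \<and> pfx t g = pfx t h" using h by blast
      define g where "g = (SOME g. g \<in> pw t Mf (Suc k) \<and> pfx t g = pfx t h)"
      have g: "g \<in> pw t Mf (Suc k)" "pfx t g = pfx t h" unfolding g_def using someI_ex[OF ex] by blast+
      have "\<psi> (pfx t h) = \<chi> (cmp t f0 g)" unfolding \<psi>_def g_def using h by auto
      also have "\<dots> = \<chi> (cmp t f0 h)" using f0(2) g h by blast
      finally show ?thesis .
    qed
    have "\<forall>w\<in>UNIV. \<psi> w < Suc r"
    proof
      fix b :: "nat list"
      show "\<psi> b < Suc r"
      proof (cases "\<exists>g\<in>pw t Mf (Suc k). pfx t g = b")
        case True
        then obtain h where h: "h \<in> pw t Mf (Suc k)" "pfx t h = b" by blast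
        have "cmp t f0 h \<in> pw t n (Suc k)" using cmp_pw[OF f0(1) h(1)] .
        then show ?thesis using psi[OF h(1)] h(2) bd by fastforce
      next
        case False then show ?thesis unfolding \<psi>_def by simp
      qed
    qed
    from Mf[THEN spec, of \<psi>, THEN mp, OF this] obtain f1 c where f1: "f1 \<in> pw t Mf m" "\<forall>g\<in>pw t m 1. \<psi> (pfx t (cmp t f1 g)) = c"
      by blast
    show "\<exists>f\<in>pw t n m. \<exists>c. \<forall>g\<in>pw t m (Suc k). \<chi> (cmp t f g) = c"
    proof (intro bexI[OF _ cmp_pw[OF f0(1) f1(1)]] exI[of _ c] ballI)
      fix g assume g: "g \<in> pw t m (Suc k)"
      have f0v: "set f0 \<subseteq> {..<t + length f1}" using pwD(2)[OF f0(1)] pwD(1)[OF f1(1)] by auto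
      have f1v: "set f1 \<subseteq> {..<t + length g}" using pwD(2)[OF f1(1)] pwD(1)[OF g] by auto
      have "cmp t (cmp t f0 f1) g = cmp t f0 (cmp t f1 g)" using cmp_assoc[OF f0v] .
      moreover have "\<chi> (cmp t f0 (cmp t f1 g)) = \<psi> (pfx t (cmp t f1 g))" using psi[OF cmp_pw[OF f1(1) g]] by simp
      moreover have "pfx t (cmp t f1 g) = pfx t (cmp t f1 (coll t g))" using coll_pfx[OF f1v] by simp
      moreover have "\<psi> (pfx t (cmp t f1 (coll t g))) = c" using f1(2) coll_pw[OF g] by blast
      ultimately show "\<chi> (cmp t (cmp t f0 f1) g) = c" by simp
    qed
  qed
qed

definition mw :: "nat \<Rightarrow> nat \<Rightarrow> nat list \<Rightarrow> nat mat" where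
  "mw n k w = mat n k (\<lambda>(i,j). if w!i = j then 1 else 0)"

definition fo :: "nat list \<Rightarrow> nat \<Rightarrow> nat" where
  "fo w j = (LEAST i. i < length w \<and> w!i = j)"

lemma fo: assumes "j \<in> set w" shows "fo w j < length w" "w ! (fo w j) = j"
proof -
  have ex: "\<exists>i. i < length w \<and> w!i = j" using assms by (auto simp: in_set_conv_nth)
  show "fo w j < length w" "w ! (fo w j) = j" using LeastI_ex[OF ex] unfolding fo_def by auto
qed

lemma fo_le: "i < length w \<Longrightarrow> w!i = j \<Longrightarrow> fo w j \<le> i"
  unfolding fo_def by (rule Least_le) simp

lemma mw_dims[simp]: "dim_row (mw n k w) = n" "dim_col (mw n k w) = k"
  unfolding mw_def by auto

lemma mw_index: "i < n \<Longrightarrow> j < k \<Longrightarrow> mw n k w $$ (i,j) = (if w!i = j then 1 else 0)"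
  unfolding mw_def by simp

lemma col_set_mw: "j < k \<Longrightarrow> col_set (mw n k w) j = {i. i < n \<and> w!i = j}"
  unfolding col_set_def by (auto simp: mw_index split: if_splits)

lemma Min_col: assumes "length w = n" "j \<in> set w" "j < k"
  shows "Min (col_set (mw n k w) j) = fo w j"
proof (rule Min_eqI)
  show "finite (col_set (mw n k w) j)" unfolding col_set_mw[OF assms(3)] by auto
  show "fo w j \<in> col_set (mw n k w) j" unfolding col_set_mw[OF assms(3)] using fo[OF assms(2)] assms(1) by auto
  show "fo w j \<le> y" if "y \<in> col_set (mw n k w) j" for y
    using that unfolding col_set_mw[OF assms(3)] using fo_le assms(1) by auto
qed

lemma mw_Mba: assumes "length w = n" "set w = {..<k}" shows "mw n k w \<in> Mba n k"
proof -
  have "mw n k w \<in> carrier_mat n k" by auto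
  moreover have "\<forall>i<n. \<forall>j<k. mw n k w $$ (i, j) \<in> {0, 1}" by (auto simp: mw_index)
  moreover have "\<forall>j<k. col_set (mw n k w) j \<noteq> {}"
  proof (intro allI impI)
    fix j assume j: "j < k"
    then have "j \<in> set w" using assms(2) by auto
    then show "col_set (mw n k w) j \<noteq> {}" unfolding col_set_mw[OF j] using fo[of j w] assms(1) by auto
  qed
  moreover have "\<forall>j<k. \<forall>j'<k. j \<noteq> j' \<longrightarrow> col_set (mw n k w) j \<inter> col_set (mw n k w) j' = {}"
    by (auto simp: col_set_mw)
  moreover have "(\<Union>j<k. col_set (mw n k w) j) = {..<n}"
  proof
    show "(\<Union>j<k. col_set (mw n k w) j) \<subseteq> {..<n}" by (auto simp: col_set_mw)
    show "{..<n} \<subseteq> (\<Union>j<k. col_set (mw n k w) j)"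
    proof
      fix i assume "i \<in> {..<n}"
      then have i: "i < n" by simp
      then have "w!i \<in> set w" using assms(1) by simp
      then have "w!i < k" using assms(2) by auto
      then show "i \<in> (\<Union>j<k. col_set (mw n k w) j)" using i by (auto simp: col_set_mw)
    qed
  qed
  ultimately show ?thesis unfolding Mba_def by blast
qed

lemma Mba_mw: assumes A: "A \<in> Mba n k" shows "\<exists>w. length w = n \<and> set w = {..<k} \<and> A = mw n k w"
proof -
  have car: "A \<in> carrier_mat n k" and ent: "\<forall>i<n. \<forall>j<k. A $$ (i, j) \<in> {0, 1}"
    and ne: "\<forall>j<k. col_set A j \<noteq> {}"
    and dis: "\<forall>j<k. \<forall>j'<k. j \<noteq> j' \<longrightarrow> col_set A j \<inter> col_set A j' = {}"
    and un: "(\<Union>j<k. col_set A j) = {..<n}" using A unfolding Mba_def by auto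
  have dr: "dim_row A = n" "dim_col A = k" using car by auto
  have ex: "\<exists>j. j < k \<and> A $$ (i,j) = 1" if "i < n" for i
  proof -
    have "i \<in> (\<Union>j<k. col_set A j)" using un that by auto
    then show ?thesis unfolding col_set_def by auto
  qed
  define w where "w = map (\<lambda>i. SOME j. j < k \<and> A $$ (i,j) = 1) [0..<n]"
  have wi: "w!i < k \<and> A $$ (i, w!i) = 1" if "i < n" for i
    unfolding w_def using someI_ex[OF ex[OF that]] that by simp
  have uniq: "j = w!i" if "i < n" "j < k" "A $$ (i,j) = 1" for i j
  proof (rule ccontr)
    assume "j \<noteq> w!i"
    then have "col_set A j \<inter> col_set A (w!i) = {}" using dis that(2) wi[OF that(1)] by blast
    moreover have "i \<in> col_set A j" "i \<in> col_set A (w!i)" unfolding col_set_def using that wi[OF that(1)] dr by auto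
    ultimately show False by blast
  qed
  have lw: "length w = n" unfolding w_def by simp
  have "set w = {..<k}"
  proof
    show "set w \<subseteq> {..<k}" using wi lw by (auto simp: in_set_conv_nth)
    show "{..<k} \<subseteq> set w"
    proof
      fix j assume "j \<in> {..<k}"
      then have j: "j < k" by simp
      then obtain i where "i \<in> col_set A j" using ne by blast
      then have i: "i < n" "A $$ (i,j) = 1" unfolding col_set_def using dr by auto
      then have "j = w!i" using uniq j by blast
      then show "j \<in> set w" using i lw by simp
    qed
  qed
  moreover have "A = mw n k w"
  proof (rule eq_matI)
    fix i j assume "i < dim_row (mw n k w)" "j < dim_col (mw n k w)"
    then have ij: "i < n" "j < k" by auto
    show "A $$ (i, j) = mw n k w $$ (i, j)"
    proof (cases "w!i = j")
      case True then show ?thesis using wi[OF ij(1)] ij by (simp add: mw_index)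
    next
      case False
      then have "A $$ (i,j) \<noteq> 1" using uniq ij by blast
      then have "A $$ (i,j) = 0" using ent ij by auto
      then show ?thesis using False ij by (simp add: mw_index)
    qed
  qed (use dr in auto)
  ultimately show ?thesis using lw by blast
qed

lemma mw_Moba_iff: assumes lw: "length w = n" and sw: "set w = {..<k}"
  shows "mw n k w \<in> Moba n k \<longleftrightarrow> rigid 0 w"
proof -
  have mins: "Min (col_set (mw n k w) c) = fo w c" if "c < k" for c
    using Min_col[OF lw _ that] sw that by auto
  have "mw n k w \<in> Moba n k \<longleftrightarrow> (\<forall>c. c + 1 < k \<longrightarrow> fo w c < fo w (c + 1))"
    unfolding Moba_def using mw_Mba[OF lw sw] mins by auto
  also have "\<dots> \<longleftrightarrow> rigid 0 w"
  proof
    assume a: "\<forall>c. c + 1 < k \<longrightarrow> fo w c < fo w (c + 1)"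
    show "rigid 0 w" unfolding rigid_def
    proof (intro allI impI)
      fix i assume i: "i < length w" "0 < w!i"
      define c where "c = w!i - 1"
      have wi: "w!i = c + 1" using i(2) unfolding c_def by simp
      have "w!i \<in> set w" using i(1) by simp
      then have "w!i < k" using sw by auto
      then have ck: "c + 1 < k" using wi by simp
      have "fo w c < fo w (c + 1)" using a ck by blast
      moreover have "fo w (c + 1) \<le> i" using fo_le[OF i(1) wi] .
      moreover have "c \<in> set w" using sw ck by auto
      ultimately have "fo w c < i" "w ! fo w c = c" "fo w c < length w" using fo[of c w] by auto
      moreover have "fo w c < length (take i w)" using \<open>fo w c < i\<close> i(1) by simp
      ultimately have "take i w ! fo w c = c" by simp
      then have "c \<in> set (take i w)" using \<open>fo w c < length (take i w)\<close> by (metis nth_mem)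
      then show "w!i - 1 \<in> set (take i w)" unfolding c_def .
    qed
  next
    assume r: "rigid 0 w"
    show "\<forall>c. c + 1 < k \<longrightarrow> fo w c < fo w (c + 1)"
    proof (intro allI impI)
      fix c assume ck: "c + 1 < k"
      then have "c + 1 \<in> set w" using sw by auto
      then have p: "fo w (c+1) < length w" "w ! fo w (c+1) = c + 1" using fo by auto
      from r have "\<forall>i<length w. 0 < w!i \<longrightarrow> w!i - 1 \<in> set (take i w)" unfolding rigid_def .
      then have "0 < w ! fo w (c+1) \<longrightarrow> w ! fo w (c+1) - 1 \<in> set (take (fo w (c+1)) w)" using p(1) by blast
      then have "w ! fo w (c+1) - 1 \<in> set (take (fo w (c+1)) w)" using p(2) by simp
      then have "c \<in> set (take (fo w (c+1)) w)" using p(2) by simp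
      then obtain i where i: "i < fo w (c+1)" "w!i = c" by (auto simp: in_set_conv_nth)
      then have "fo w c \<le> i" using fo_le p(1) by simp
      then show "fo w c < fo w (c + 1)" using i by simp
    qed
  qed
  finally show ?thesis .
qed

lemma pw00_iff: "w \<in> pw 0 n k \<longleftrightarrow> length w = n \<and> set w = {..<k} \<and> rigid 0 w"
  unfolding pw_def atLeast0LessThan by auto

lemma mw_mult: assumes "length f = n" "set f \<subseteq> {..<m}" "length g = m"
  shows "mw n m f * mw m k g = mw n k (map (\<lambda>x. g!x) f)"
proof (rule eq_matI)
  fix i j assume "i < dim_row (mw n k (map (\<lambda>x. g!x) f))" "j < dim_col (mw n k (map (\<lambda>x. g!x) f))"
  then have ij: "i < n" "j < k" by auto
  have "f!i \<in> set f" using ij assms(1) by simp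
  then have fi: "f!i < m" using assms(2) by auto
  have "(mw n m f * mw m k g) $$ (i, j) = (\<Sum>l\<in>{0..<m}. (if f!i = l then 1 else 0) * (if g!l = j then 1 else 0))"
    using ij by (simp add: scalar_prod_def mw_index)
  also have "\<dots> = (\<Sum>l\<in>{0..<m}. if f!i = l then (if g!l = j then 1 else 0) else 0)"
    by (rule sum.cong) auto
  also have "\<dots> = (if g!(f!i) = j then 1 else 0)" using fi by (simp add: sum.delta)
  also have "\<dots> = mw n k (map (\<lambda>x. g!x) f) $$ (i, j)" using ij assms by (simp add: mw_index)
  finally show "(mw n m f * mw m k g) $$ (i, j) = mw n k (map (\<lambda>x. g!x) f) $$ (i, j)" .
qed auto

lemma perm_mat_mw: "perm_mat k p = mw k k (map p [0..<k])"
  unfolding perm_mat_def mw_def by (rule eq_matI) auto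

lemma transpose_perm: assumes "p permutes {..<k}" shows "transpose_mat (perm_mat k p) = perm_mat k (Hilbert_Choice.inv p)"
proof (rule eq_matI)
  fix i j assume "i < dim_row (perm_mat k (Hilbert_Choice.inv p))" "j < dim_col (perm_mat k (Hilbert_Choice.inv p))"
  then have ij: "i < k" "j < k" unfolding perm_mat_def by auto
  have "(p j = i) = (Hilbert_Choice.inv p i = j)" using permutes_inv_eq[OF assms] by metis
  then show "transpose_mat (perm_mat k p) $$ (i, j) = perm_mat k (Hilbert_Choice.inv p) $$ (i, j)"
    using ij unfolding perm_mat_def by simp
qed (auto simp: perm_mat_def)

lemma cmp0: "cmp 0 f g = map (\<lambda>x. g!x) f"
  unfolding cmp_def by simp

definition rk :: "nat list \<Rightarrow> nat \<Rightarrow> nat \<Rightarrow> nat" where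
  "rk w k j = card {j'. j' < k \<and> fo w j' < fo w j}"

lemma fo_inj: "j \<in> set w \<Longrightarrow> j' \<in> set w \<Longrightarrow> fo w j = fo w j' \<Longrightarrow> j = j'"
  using fo(2) by metis

lemma rk_mono: assumes "j < k" "j' < k" "fo w j' < fo w j" shows "rk w k j' < rk w k j"
proof -
  have "{x. x < k \<and> fo w x < fo w j'} \<subset> {x. x < k \<and> fo w x < fo w j}"
    using assms by auto
  then show ?thesis unfolding rk_def by (rule psubset_card_mono[rotated]) simp
qed

lemma rk_lt: assumes "j < k" shows "rk w k j < k"
proof -
  have "{x. x < k \<and> fo w x < fo w j} \<subset> {..<k}" using assms by auto
  then have "card {x. x < k \<and> fo w x < fo w j} < card {..<k}" by (rule psubset_card_mono[rotated]) simp
  then show ?thesis unfolding rk_def by simp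
qed

lemma rk_iff: assumes sw: "set w = {..<k}" and "j < k" "j' < k"
  shows "rk w k j' < rk w k j \<longleftrightarrow> fo w j' < fo w j"
proof
  assume a: "rk w k j' < rk w k j"
  show "fo w j' < fo w j"
  proof (rule ccontr)
    assume "\<not> fo w j' < fo w j"
    then consider "fo w j' = fo w j" | "fo w j < fo w j'" by linarith
    then show False
    proof cases
      case 1 then have "j' = j" using fo_inj[of j' w j] sw assms by auto
      then show False using a by simp
    next
      case 2 then show False using rk_mono[OF assms(3,2) 2] a by simp
    qed
  qed
qed (rule rk_mono[OF assms(2,3)])

lemma rk_bij: assumes sw: "set w = {..<k}" shows "bij_betw (rk w k) {..<k} {..<k}"
proof -
  have inj: "inj_on (rk w k) {..<k}"
  proof (rule inj_onI)
    fix x y assume xy: "x \<in> {..<k}" "y \<in> {..<k}" "rk w k x = rk w k y"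
    have "\<not> fo w x < fo w y" using rk_iff[OF sw, of y x] xy by simp
    moreover have "\<not> fo w y < fo w x" using rk_iff[OF sw, of x y] xy by simp
    ultimately have "fo w x = fo w y" by simp
    then show "x = y" using fo_inj[of x w y] sw xy by auto
  qed
  have sub: "rk w k ` {..<k} \<subseteq> {..<k}" using rk_lt by auto
  have "card (rk w k ` {..<k}) = card {..<k}" using card_image[OF inj] .
  then have "rk w k ` {..<k} = {..<k}" using sub by (simp add: card_subset_eq)
  then show ?thesis using inj unfolding bij_betw_def by blast
qed

definition srt :: "nat list \<Rightarrow> nat \<Rightarrow> nat \<Rightarrow> nat" where
  "srt w k j = (if j < k then rk w k j else j)"

lemma srt_permutes: assumes sw: "set w = {..<k}" shows "srt w k permutes {..<k}"
proof (rule bij_imp_permutes)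
  show "bij_betw (srt w k) {..<k} {..<k}" using rk_bij[OF sw] by (rule bij_betw_cong[THEN iffD1, rotated]) (simp add: srt_def)
  show "srt w k x = x" if "x \<notin> {..<k}" for x using that unfolding srt_def by simp
qed

lemma srt_rigid: assumes sw: "set w = {..<k}" shows "rigid 0 (map (srt w k) w)"
  unfolding rigid_def
proof (intro allI impI)
  fix i assume i: "i < length (map (srt w k) w)" "0 < map (srt w k) w ! i"
  then have il: "i < length w" by simp
  define j where "j = w!i"
  have jk: "j < k" using il sw unfolding j_def by (metis lessThan_iff nth_mem)
  have v: "map (srt w k) w ! i = rk w k j" using il jk unfolding j_def srt_def by simp
  have "rk w k j < k" using rk_lt[OF jk] .
  then have "rk w k j - 1 < k" by simp
  then obtain j' where j': "j' < k" "rk w k j' = rk w k j - 1"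
    using rk_bij[OF sw] unfolding bij_betw_def by (metis imageE lessThan_iff)
  have "rk w k j' < rk w k j" using j'(2) i(2) v by simp
  then have "fo w j' < fo w j" using rk_iff[OF sw jk j'(1)] by simp
  moreover have "fo w j \<le> i" using fo_le[OF il] unfolding j_def by simp
  ultimately have lt: "fo w j' < i" by simp
  have j'w: "j' \<in> set w" using sw j'(1) by simp
  have "map (srt w k) w ! fo w j' = rk w k j'" using fo[OF j'w] j'(1) unfolding srt_def by simp
  moreover have "fo w j' < length (take i (map (srt w k) w))" using lt il by simp
  ultimately have "take i (map (srt w k) w) ! fo w j' = rk w k j'" using lt by simp
  then have "rk w k j' \<in> set (take i (map (srt w k) w))" using \<open>fo w j' < length (take i (map (srt w k) w))\<close> by (metis nth_mem)
  then show "map (srt w k) w ! i - 1 \<in> set (take i (map (srt w k) w))" using j'(2) v by simp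
qed

lemma rigid_fo_step: assumes sw: "set w = {..<k}" and r: "rigid 0 w" and ck: "c + 1 < k"
  shows "fo w c < fo w (c + 1)"
proof -
  have "c + 1 \<in> set w" using sw ck by auto
  then have p: "fo w (c+1) < length w" "w ! fo w (c+1) = c + 1" using fo by auto
  from r have "\<forall>i<length w. 0 < w!i \<longrightarrow> w!i - 1 \<in> set (take i w)" unfolding rigid_def .
  then have "0 < w ! fo w (c+1) \<longrightarrow> w ! fo w (c+1) - 1 \<in> set (take (fo w (c+1)) w)" using p(1) by blast
  then have "c \<in> set (take (fo w (c+1)) w)" using p(2) by simp
  then obtain i where i: "i < fo w (c+1)" "w!i = c" by (auto simp: in_set_conv_nth)
  then have "fo w c \<le> i" using fo_le p(1) by simp
  then show ?thesis using i by simp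
qed

lemma chain_mono: assumes "\<And>c. c + 1 < k \<Longrightarrow> (f::nat \<Rightarrow> nat) c < f (c + 1)" "c < c'" "c' < k"
  shows "f c < f c'"
  using assms(2,3)
proof (induction c')
  case 0 then show ?case by simp
next
  case (Suc c')
  show ?case
  proof (cases "c = c'")
    case True then show ?thesis using assms(1)[of c'] Suc.prems by simp
  next
    case False
    then have "f c < f c'" using Suc by simp
    also have "f c' < f (Suc c')" using assms(1)[of c'] Suc.prems by simp
    finally show ?thesis .
  qed
qed

lemma fo_map: assumes "inj_on q (set w)" "j \<in> set w" shows "fo (map q w) (q j) = fo w j"
proof -
  have "(\<lambda>i. i < length (map q w) \<and> map q w ! i = q j) = (\<lambda>i. i < length w \<and> w ! i = j)"
  proof
    fix i show "(i < length (map q w) \<and> map q w ! i = q j) = (i < length w \<and> w ! i = j)"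
      using assms by (auto simp: inj_on_def)
  qed
  then show ?thesis unfolding fo_def by simp
qed

lemma sort_unique: assumes sw: "set w = {..<k}" and q: "q permutes {..<k}" and r: "rigid 0 (map q w)"
  and jk: "j < k" shows "q j = rk w k j"
proof -
  define u where "u = map q w"
  have su: "set u = {..<k}" unfolding u_def using permutes_image[OF q] sw by simp
  have injq: "inj_on q (set w)" using permutes_inj[OF q] by (auto simp: inj_on_def)
  have fu: "fo u (q x) = fo w x" if "x < k" for x unfolding u_def using fo_map[OF injq] sw that by simp
  have step: "fo u c < fo u (c + 1)" if "c + 1 < k" for c using rigid_fo_step[OF su r[folded u_def] that] .
  have qk: "q x < k" if "x < k" for x using permutes_in_image[OF q] that by simp
  have iff: "fo w x < fo w j \<longleftrightarrow> q x < q j" if "x < k" for x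
  proof
    assume "fo w x < fo w j"
    then have "fo u (q x) < fo u (q j)" using fu that jk by simp
    then show "q x < q j"
      using chain_mono[of k "fo u", OF step, of "q j" "q x"] qk[OF that] qk[OF jk]
      by (metis less_asym nat_neq_iff)
  next
    assume "q x < q j"
    then have "fo u (q x) < fo u (q j)" using chain_mono[of k "fo u", OF step] qk[OF jk] by blast
    then show "fo w x < fo w j" using fu that jk by simp
  qed
  have "rk w k j = card {x. x < k \<and> q x < q j}" unfolding rk_def using iff by (metis (lifting))
  also have "{x. x < k \<and> q x < q j} = Hilbert_Choice.inv q ` {c. c < q j}"
  proof
    show "{x. x < k \<and> q x < q j} \<subseteq> Hilbert_Choice.inv q ` {c. c < q j}"
      using permutes_inverses(2)[OF q] by (auto intro!: image_eqI)
    show "Hilbert_Choice.inv q ` {c. c < q j} \<subseteq> {x. x < k \<and> q x < q j}"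
    proof
      fix x assume "x \<in> Hilbert_Choice.inv q ` {c. c < q j}"
      then obtain c where c: "c < q j" "x = Hilbert_Choice.inv q c" by blast
      have "c < k" using c(1) qk[OF jk] by simp
      then have "x < k" using permutes_in_image[OF permutes_inv[OF q]] c(2) by simp
      moreover have "q x = c" using permutes_inverses(1)[OF q] c(2) by simp
      ultimately show "x \<in> {x. x < k \<and> q x < q j}" using c(1) by simp
    qed
  qed
  also have "card (Hilbert_Choice.inv q ` {c. c < q j}) = card {c. c < q j}"
    by (rule card_image) (rule inj_on_subset[OF permutes_inj[OF permutes_inv[OF q]] subset_UNIV])
  finally show ?thesis by simp
qed

lemma mw_perm: assumes "length w = n" "set w \<subseteq> {..<k}"
  shows "mw n k w * perm_mat k q = mw n k (map q w)"
proof -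
  have "mw n k w * perm_mat k q = mw n k (map (\<lambda>x. map q [0..<k] ! x) w)"
    unfolding perm_mat_mw using mw_mult[of w n k "map q [0..<k]" k] assms by simp
  also have "map (\<lambda>x. map q [0..<k] ! x) w = map q w" using assms(2) by (auto intro!: map_cong)
  finally show ?thesis .
qed

lemma piM_mw: assumes lw: "length w = m" and sw: "set w = {..<k}"
  shows "\<exists>p. p permutes {..<k} \<and> piM (mw m k w) = perm_mat k p \<and> map p w \<in> pw 0 m k"
proof -
  define p0 where "p0 = srt w k"
  have p0: "p0 permutes {..<k}" unfolding p0_def using srt_permutes[OF sw] .
  have prod: "mw m k w * perm_mat k q = mw m k (map q w)" for q using mw_perm[of w m k q] lw sw by simp
  have setq: "set (map q w) = {..<k}" if "q permutes {..<k}" for q using permutes_image[OF that] sw by simp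
  have r0: "rigid 0 (map p0 w)" unfolding p0_def using srt_rigid[OF sw] .
  have good: "perm_mat k p0 \<in> Sk k \<and> mw m k w * perm_mat k p0 \<in> Moba m k"
  proof
    show "perm_mat k p0 \<in> Sk k" unfolding Sk_def using p0 by blast
    show "mw m k w * perm_mat k p0 \<in> Moba m k" unfolding prod
      using mw_Moba_iff[of "map p0 w" m k] lw setq[OF p0] r0 by simp
  qed
  have uniq: "P = perm_mat k p0" if PP: "P \<in> Sk k \<and> mw m k w * P \<in> Moba m k" for P
  proof -
    obtain q where q: "P = perm_mat k q" "q permutes {..<k}" using PP unfolding Sk_def by blast
    have "mw m k (map q w) \<in> Moba m k" using PP q(1) prod by simp
    then have "rigid 0 (map q w)" using mw_Moba_iff[of "map q w" m k] lw setq[OF q(2)] by simp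
    then have "q j = p0 j" if "j < k" for j using sort_unique[OF sw q(2) _ that] that unfolding p0_def srt_def by simp
    then have e: "map q [0..<k] = map p0 [0..<k]" by simp
    show ?thesis unfolding q(1) perm_mat_mw e ..
  qed
  have "piM (mw m k w) = perm_mat k p0" unfolding piM_def mw_dims
    by (rule the_equality) (use good uniq in blast)+
  moreover have "map p0 w \<in> pw 0 m k" unfolding pw00_iff using lw setq[OF p0] r0 by simp
  ultimately show ?thesis using p0 by blast
qed

lemma mw_transpose_Mba: assumes lw: "length w = n" and sw: "set w = {..<k}" and P: "P \<in> Sk k"
  shows "mw n k w * transpose_mat P \<in> Mba n k"
proof -
  obtain p where p: "P = perm_mat k p" "p permutes {..<k}" using P unfolding Sk_def by blast
  have "mw n k w * transpose_mat P = mw n k (map (Hilbert_Choice.inv p) w)"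
    unfolding p(1) transpose_perm[OF p(2)] using mw_perm[of w n k] lw sw by simp
  moreover have "set (map (Hilbert_Choice.inv p) w) = {..<k}" using permutes_image[OF permutes_inv[OF p(2)]] sw by simp
  ultimately show ?thesis using mw_Mba[of "map (Hilbert_Choice.inv p) w" n k] lw by simp
qed

lemma Sk_finite: "finite (Sk k)"
proof -
  have "Sk k = perm_mat k ` {p. p permutes {..<k}}" unfolding Sk_def by auto
  then show ?thesis using finite_permutations[of "{..<k}"] by simp
qed

theorem theorem5p2:
  fixes k m r :: nat
  shows "\<exists>n::nat. \<forall>c :: nat mat \<Rightarrow> nat. (\<forall>A \<in> Mba n k. c A < r) \<longrightarrow>
     (\<exists>R \<in> Moba n m. \<exists>ch :: nat mat \<Rightarrow> nat. (\<forall>P \<in> Sk k. ch P < r) \<and>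
        (\<forall>B \<in> Mba m k. c (R * B) = ch (piM B)))"
proof (cases "r = 0")
  case True
  have "set (idw 0 k) = {..<k}" unfolding idw_def by auto
  then have "mw k k (idw 0 k) \<in> Mba k k" using mw_Mba[of "idw 0 k" k k] unfolding idw_def by simp
  then have "\<forall>c :: nat mat \<Rightarrow> nat. \<not> (\<forall>A \<in> Mba k k. c A < r)" using True by auto
  then show ?thesis by blast
next
  case False
  then have r: "0 < r" by simp
  obtain Ps where Ps: "set Ps = Sk k" using finite_list[OF Sk_finite] by blast
  define C where "C = {l. set l \<subseteq> {..<r} \<and> length l = length Ps}"
  have fC: "finite C" unfolding C_def by (rule finite_lists_length_eq) simp
  have "\<exists>n. \<forall>\<chi>::nat list \<Rightarrow> nat list. \<chi> ` pw 0 n k \<subseteq> C \<longrightarrow> (\<exists>f\<in>pw 0 n m. \<exists>c. \<forall>g\<in>pw 0 m k. \<chi> (cmp 0 f g) = c)"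
    by (rule gen_col[where D="\<lambda>n. pw 0 n k" and S="\<lambda>n. pw 0 n m" and G="\<lambda>_. pw 0 m k" and T="cmp 0", OF GR[where t=0 and k=k and m=m] cmp_pw[of _ 0 _ m _ k] fC])
  then obtain n where n: "\<forall>\<chi>::nat list \<Rightarrow> nat list. \<chi> ` pw 0 n k \<subseteq> C \<longrightarrow> (\<exists>f\<in>pw 0 n m. \<exists>c. \<forall>g\<in>pw 0 m k. \<chi> (cmp 0 f g) = c)"
    by blast
  show ?thesis
  proof (intro exI[of _ n] allI impI)
    fix c :: "nat mat \<Rightarrow> nat" assume bd: "\<forall>A \<in> Mba n k. c A < r"
    have cw: "c (mw n k w * transpose_mat P) < r" if "w \<in> pw 0 n k" "P \<in> Sk k" for w P
    proof -
      have "length w = n" "set w = {..<k}" using that(1) unfolding pw00_iff by auto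
      then show ?thesis using bd mw_transpose_Mba[OF _ _ that(2)] by blast
    qed
    define \<chi> where "\<chi> w = map (\<lambda>P. c (mw n k w * transpose_mat P)) Ps" for w
    have "\<chi> ` pw 0 n k \<subseteq> C" unfolding C_def \<chi>_def using cw Ps by auto
    from n[THEN spec, of \<chi>, THEN mp, OF this] obtain f cv where f: "f \<in> pw 0 n m" "\<forall>g\<in>pw 0 m k. \<chi> (cmp 0 f g) = cv"
      by blast
    have lf: "length f = n" and sf: "set f = {..<m}" and rf: "rigid 0 f" using f(1) unfolding pw00_iff by auto
    have R: "mw n m f \<in> Moba n m" using mw_Moba_iff[OF lf sf] rf by simp
    define ch where "ch P = (if pw 0 m k = {} then 0 else c (mw n k (cmp 0 f (SOME g. g \<in> pw 0 m k)) * transpose_mat P))" for P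
    have chr: "\<forall>P \<in> Sk k. ch P < r"
    proof
      fix P assume P: "P \<in> Sk k"
      show "ch P < r"
      proof (cases "pw 0 m k = {}")
        case True then show ?thesis unfolding ch_def using r by simp
      next
        case False
        then have "(SOME g. g \<in> pw 0 m k) \<in> pw 0 m k" by (metis equals0I someI)
        then have "cmp 0 f (SOME g. g \<in> pw 0 m k) \<in> pw 0 n k" using cmp_pw[OF f(1)] by blast
        then show ?thesis unfolding ch_def using False cw[OF _ P] by simp
      qed
    qed
    have main: "c (mw n m f * B) = ch (piM B)" if B: "B \<in> Mba m k" for B
    proof -
      obtain w where w: "length w = m" "set w = {..<k}" "B = mw m k w" using Mba_mw[OF B] by blast
      obtain p where p: "p permutes {..<k}" "piM (mw m k w) = perm_mat k p" "map p w \<in> pw 0 m k"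
        using piM_mw[OF w(1,2)] by blast
      define g where "g = map p w"
      have g: "g \<in> pw 0 m k" using p(3) unfolding g_def .
      then have ne: "pw 0 m k \<noteq> {}" by blast
      define g0 where "g0 = (SOME g. g \<in> pw 0 m k)"
      have g0: "g0 \<in> pw 0 m k" unfolding g0_def using g by (rule someI)
      have PS: "perm_mat k p \<in> set Ps" unfolding Ps Sk_def using p(1) by blast
      have sfg: "set (cmp 0 f g) \<subseteq> {..<k}" using cmp_pw[OF f(1) g] unfolding pw00_iff by auto
      have "mw n m f * B = mw n k (map (\<lambda>x. w!x) f)" unfolding w(3) using mw_mult[of f n m w k] lf sf w(1) by simp
      also have "map (\<lambda>x. w!x) f = map (Hilbert_Choice.inv p) (cmp 0 f g)"
        unfolding cmp0 g_def using sf w(1,2) permutes_inverses(2)[OF p(1)] by (auto intro!: map_cong)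
      also have "mw n k \<dots> = mw n k (cmp 0 f g) * transpose_mat (perm_mat k p)"
        unfolding transpose_perm[OF p(1)] using mw_perm[of "cmp 0 f g" n k] lf sfg by simp
      finally have e: "mw n m f * B = mw n k (cmp 0 f g) * transpose_mat (perm_mat k p)" .
      have "\<chi> (cmp 0 f g) = \<chi> (cmp 0 f g0)" using f(2) g g0 by simp
      then have "c (mw n k (cmp 0 f g) * transpose_mat (perm_mat k p)) = c (mw n k (cmp 0 f g0) * transpose_mat (perm_mat k p))"
        using PS unfolding \<chi>_def by (auto simp: map_eq_conv)
      moreover have "ch (piM B) = c (mw n k (cmp 0 f g0) * transpose_mat (perm_mat k p))"
        unfolding ch_def g0_def w(3) p(2) using ne by simp
      ultimately show ?thesis using e by simp
    qed
    show "\<exists>R \<in> Moba n m. \<exists>ch :: nat mat \<Rightarrow> nat. (\<forall>P \<in> Sk k. ch P < r) \<and> (\<forall>B \<in> Mba m k. c (R * B) = ch (piM B))"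
      using R chr main by blast
  qed
qed

end
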